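(* Let $\lambda>0$ with $\lambda^{-2}$ an integer and $\delta>0$. For all sufficiently large $N$ (depending on $\lambda$) the following holds. Let $f,g:[N]\to[-1,1]$ and suppose $|\widehat f(\frac aq+\beta)|\le\delta|\beta|N^2$ for all integers $1\le a,q\le\lambda^{-2}$ and all $\beta\in\mathbb{R}$. Then $$\Big|\sum_{n\ge1}(f*g)(n)1_S(n)\Big|\le 10(\delta\lambda^{-8}+\lambda)N^{3/2}.$$
   Context: $e(\theta):=e^{2\pi i\theta}$; for $f:[N]\to\mathbb{C}$, $\widehat f(\theta):=\sum_{n\le N}f(n)e(-n\theta)$. For finitely supported $f,g:\mathbb{Z}\to\mathbb{C}$ (functions on $[N]$ extended by $0$), $(f*g)(x):=\sum_{n\in\mathbb{Z}}f(n)g(x-n)$. $S:=\{m^2:m\in\mathbb{N}\}$. *)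

theory Defs
  imports "HOL-Analysis.Analysis"
begin

definition ee :: "real \<Rightarrow> complex" where
  "ee \<theta> = exp (2 * of_real pi * \<i> * of_real \<theta>)"

definition fhat :: "nat \<Rightarrow> (nat \<Rightarrow> real) \<Rightarrow> real \<Rightarrow> complex" where
  "fhat N f \<theta> = (\<Sum>n\<in>{1..N}. of_real (f n) * ee (- (real n * \<theta>)))"

definition zext :: "nat \<Rightarrow> (nat \<Rightarrow> real) \<Rightarrow> int \<Rightarrow> real" where
  "zext N f x = (if 1 \<le> x \<and> x \<le> int N then f (nat x) else 0)"

text \<open>convolution over Z of the zero extensions (the sum over all n in Z reduces to
  the support {1..N} of the first factor)\<close>
definition conv :: "nat \<Rightarrow> (nat \<Rightarrow> real) \<Rightarrow> (nat \<Rightarrow> real) \<Rightarrow> int \<Rightarrow> real" where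
  "conv N f g x = (\<Sum>n\<in>{1..int N}. zext N f n * zext N g (x - n))"

definition Sq :: "int set" where
  "Sq = {int (m^2) | m. m \<in> (UNIV :: nat set)}"

end

theory Submission
  imports Defs
begin


lemma ee_add: "ee (x + y) = ee x * ee y"
  unfolding ee_def by (simp add: distrib_left exp_add)

lemma norm_ee [simp]: "norm (ee x) = 1"
  unfolding ee_def by (simp add: norm_exp_eq_Re)

lemma ee_int: "ee (of_int n) = 1"
  unfolding ee_def by (simp add: exp_eq_1)

lemma cnj_ee: "cnj (ee x) = ee (- x)"
  unfolding ee_def by (simp add: exp_cnj)

lemma ee_0 [simp]: "ee 0 = 1" unfolding ee_def by simp

lemma ee_pow: "ee (real n * x) = ee x ^ n"
  unfolding ee_def by (simp add: exp_of_nat_mult[symmetric] mult_ac)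

lemma ee_eq_1: assumes "ee x = 1" shows "\<exists>n::int. x = of_int n"
proof -
  from assms have "exp (\<i> * complex_of_real (2*pi*x)) = 1" unfolding ee_def by (simp add: mult_ac)
  then obtain n::int where "2*pi*x = of_int (2*n) * pi" by (auto simp: exp_eq_1)
  then have "x = of_int n" by simp
  then show ?thesis by blast
qed

lemma orth:
  fixes L :: nat and d :: int
  assumes L: "L > 0" and d: "\<bar>d\<bar> < int L"
  shows "(\<Sum>r<L. ee (real r * (of_int d / real L))) = (if d = 0 then of_nat L else 0)"
proof (cases "d = 0")
  case True then show ?thesis by simp
next
  case False
  define z where "z = ee (of_int d / real L)"
  have zL: "z ^ L = 1" unfolding z_def using L by (simp add: ee_pow[symmetric] ee_int)
  have "z \<noteq> 1"
  proof
    assume "z = 1"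
    then obtain n::int where n: "of_int d / real L = of_int n" unfolding z_def using ee_eq_1 by blast
    then have "d = n * int L" using L by (simp add: field_simps) (metis of_int_eq_iff of_int_mult of_int_of_nat_eq)
    moreover have "n \<noteq> 0" using \<open>d = n * int L\<close> False by auto
    ultimately have "\<bar>d\<bar> = \<bar>n\<bar> * int L" by (simp add: abs_mult)
    also have "\<dots> \<ge> int L"
    proof -
      have "1 \<le> \<bar>n\<bar>" using \<open>n \<noteq> 0\<close> by linarith
      then show ?thesis using mult_right_mono[of 1 "\<bar>n\<bar>" "int L"] by simp
    qed
    finally show False using d by simp
  qed
  have "(\<Sum>r<L. ee (real r * (of_int d / real L))) = (\<Sum>r<L. z ^ r)"
    unfolding z_def by (intro sum.cong refl) (rule ee_pow)
  also have "\<dots> = 0" using \<open>z \<noteq> 1\<close> zL by (simp add: sum_gp_strict)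
  finally show ?thesis using False by simp
qed

lemma fhat_periodic: "fhat N f (x + of_int m) = fhat N f x"
proof -
  have "ee (- (real n * (x + of_int m))) = ee (- (real n * x))" for n
  proof -
    have "- (real n * (x + of_int m)) = - (real n * x) + of_int (- (int n * m))" by (simp add: algebra_simps)
    then show ?thesis unfolding ee_add[of "- (real n * x)"] by (simp only: ee_add ee_int) simp
  qed
  then show ?thesis unfolding fhat_def by simp
qed

lemma ee_mix: "ee (- (real n * (real r / real L))) * ee (real n' * (real r / real L))
   = ee (real r * (of_int (int n' - int n) / real L))"
proof -
  have "- (real n * (real r / real L)) + real n' * (real r / real L) = real r * (of_int (int n' - int n) / real L)"
    by (cases "L = 0") (simp_all add: field_simps)
  then show ?thesis by (metis ee_add)
qed

lemma cnj_fhat: "cnj (fhat N f x) = (\<Sum>n\<in>{1..N}. of_real (f n) * ee (real n * x))"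
  unfolding fhat_def by (simp add: cnj_ee)

lemma parseval:
  fixes L N :: nat and f :: "nat \<Rightarrow> real"
  assumes L: "L > 0" "N \<le> L"
  shows "(\<Sum>r<L. (norm (fhat N f (real r / real L)))^2) = real L * (\<Sum>n\<in>{1..N}. (f n)^2)"
proof -
  define E where "E r n n' = ee (real r * (of_int (int n' - int n) / real L))" for r n n' :: nat
  have 1: "complex_of_real ((norm (fhat N f (real r / real L)))^2)
      = (\<Sum>n\<in>{1..N}. \<Sum>n'\<in>{1..N}. of_real (f n * f n') * E r n n')" for r
  proof -
    have "complex_of_real ((norm (fhat N f (real r / real L)))^2) = fhat N f (real r / real L) * cnj (fhat N f (real r / real L))"
      by (rule complex_norm_square)
    also have "\<dots> = (\<Sum>n\<in>{1..N}. of_real (f n) * ee (- (real n * (real r / real L)))) * (\<Sum>n'\<in>{1..N}. of_real (f n') * ee (real n' * (real r / real L)))"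
      unfolding cnj_fhat by (simp add: fhat_def)
    also have "\<dots> = (\<Sum>n\<in>{1..N}. \<Sum>n'\<in>{1..N}. of_real (f n * f n') * E r n n')"
      unfolding sum_product E_def ee_mix[symmetric] by (simp add: mult_ac)
    finally show ?thesis .
  qed
  have 2: "(\<Sum>r<L. E r n n') = (if n = n' then of_nat L else 0)" if "n \<in> {1..N}" "n' \<in> {1..N}" for n n'
  proof -
    have h: "\<bar>int n' - int n\<bar> < int L" using that L by auto
    have "(\<Sum>r<L. E r n n') = (if int n' - int n = 0 then of_nat L else 0)"
      unfolding E_def by (rule orth[OF L(1) h])
    then show ?thesis by auto
  qed
  have "complex_of_real (\<Sum>r<L. (norm (fhat N f (real r / real L)))^2)
      = (\<Sum>r<L. \<Sum>n\<in>{1..N}. \<Sum>n'\<in>{1..N}. of_real (f n * f n') * E r n n')"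
    unfolding of_real_sum by (intro sum.cong refl) (rule 1)
  also have "\<dots> = (\<Sum>n\<in>{1..N}. \<Sum>n'\<in>{1..N}. of_real (f n * f n') * (\<Sum>r<L. E r n n'))"
    by (simp add: sum.swap[of _ "{..<L}"] sum_distrib_left)
  also have "\<dots> = (\<Sum>n\<in>{1..N}. \<Sum>n'\<in>{1..N}. of_real (f n * f n') * (if n = n' then of_nat L else 0))"
    by (intro sum.cong refl) (simp add: 2)
  also have "\<dots> = (\<Sum>n\<in>{1..N}. of_real (f n * f n) * of_nat L)"
    by (simp add: if_distrib cong: if_cong)
  also have "\<dots> = complex_of_real (real L * (\<Sum>n\<in>{1..N}. (f n)^2))"
    by (simp add: sum_distrib_left power2_eq_square mult_ac)
  finally show ?thesis by (simp only: of_real_eq_iff)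
qed

definition W :: "nat \<Rightarrow> real \<Rightarrow> complex" where
  "W M \<theta> = (\<Sum>m\<in>{1..M}. ee (real (m^2) * \<theta>))"

lemma ee_mix3: "ee (- (real n * (real r / real L))) * ee (- (real n' * (real r / real L))) * ee (real (m^2) * (real r / real L))
   = ee (real r * (of_int (int (m^2) - int n - int n') / real L))"
proof -
  have "- (real n * (real r / real L)) + - (real n' * (real r / real L)) + real (m^2) * (real r / real L)
     = real r * (of_int (int (m^2) - int n - int n') / real L)"
    by (cases "L = 0") (simp_all add: field_simps)
  then show ?thesis by (metis ee_add)
qed

lemma main_identity:
  fixes L N M :: nat and f g :: "nat \<Rightarrow> real"
  assumes L: "L > 0" "2 * N < L" and M: "M^2 \<le> 2 * N"
  shows "(\<Sum>r<L. fhat N f (real r / real L) * fhat N g (real r / real L) * W M (real r / real L))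
     = of_nat L * of_real (\<Sum>m\<in>{1..M}. \<Sum>n\<in>{1..N}. \<Sum>n'\<in>{1..N}. if m^2 = n + n' then f n * g n' else 0)"
proof -
  define E where "E r m n n' = ee (real r * (of_int (int (m^2) - int n - int n') / real L))" for r m n n' :: nat
  have 1: "fhat N f (real r / real L) * fhat N g (real r / real L) * W M (real r / real L)
      = (\<Sum>n\<in>{1..N}. \<Sum>n'\<in>{1..N}. \<Sum>m\<in>{1..M}. of_real (f n * g n') * E r m n n')" for r
  proof -
    have "fhat N f (real r / real L) * fhat N g (real r / real L) * W M (real r / real L)
      = (\<Sum>n\<in>{1..N}. \<Sum>n'\<in>{1..N}. (of_real (f n) * ee (- (real n * (real r / real L)))) *
            (of_real (g n') * ee (- (real n' * (real r / real L)))) * W M (real r / real L))"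
    proof -
      have "fhat N f (real r / real L) * fhat N g (real r / real L)
        = (\<Sum>n\<in>{1..N}. \<Sum>n'\<in>{1..N}. (of_real (f n) * ee (- (real n * (real r / real L)))) *
            (of_real (g n') * ee (- (real n' * (real r / real L)))))"
        by (simp only: fhat_def sum_product)
      then show ?thesis by (simp only: sum_distrib_right)
    qed
    also have "\<dots> = (\<Sum>n\<in>{1..N}. \<Sum>n'\<in>{1..N}. \<Sum>m\<in>{1..M}. of_real (f n * g n') * E r m n n')"
      unfolding W_def sum_distrib_left E_def ee_mix3[symmetric] by (intro sum.cong refl) (simp add: mult_ac)
    finally show ?thesis .
  qed
  have 2: "(\<Sum>r<L. E r m n n') = (if m^2 = n + n' then of_nat L else 0)"
    if "n \<in> {1..N}" "n' \<in> {1..N}" "m \<in> {1..M}" for n n' m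
  proof -
    have "m^2 \<le> M^2" using that by (simp add: power_mono)
    then have "m^2 \<le> 2 * N" using M by (meson order_trans)
    then have "(int m)^2 \<le> 2 * int N" by (metis of_nat_le_iff of_nat_mult of_nat_numeral of_nat_power)
    moreover have "int n \<le> int N" "int n' \<le> int N" "1 \<le> int n" "1 \<le> int n'" "2*int N < int L"
      using that L by auto
    moreover have "0 \<le> (int m)^2" by simp
    ultimately have h: "\<bar>int (m^2) - int n - int n'\<bar> < int L"
      unfolding of_nat_power abs_less_iff by linarith
    have "(\<Sum>r<L. E r m n n') = (if int (m^2) - int n - int n' = 0 then of_nat L else 0)"
      unfolding E_def by (rule orth[OF L(1) h])
    moreover have "(int (m^2) - int n - int n' = 0) = (m^2 = n + n')"
      by (simp only: diff_diff_eq eq_iff_diff_eq_0[symmetric] of_nat_add[symmetric] of_nat_eq_iff)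
    ultimately show ?thesis by metis
  qed
  have "(\<Sum>r<L. fhat N f (real r / real L) * fhat N g (real r / real L) * W M (real r / real L))
      = (\<Sum>r<L. \<Sum>n\<in>{1..N}. \<Sum>n'\<in>{1..N}. \<Sum>m\<in>{1..M}. of_real (f n * g n') * E r m n n')"
    by (intro sum.cong refl) (rule 1)
  also have "\<dots> = (\<Sum>n\<in>{1..N}. \<Sum>n'\<in>{1..N}. \<Sum>m\<in>{1..M}. of_real (f n * g n') * (\<Sum>r<L. E r m n n'))"
    by (simp add: sum.swap[of _ "{..<L}"] sum_distrib_left)
  also have "\<dots> = (\<Sum>n\<in>{1..N}. \<Sum>n'\<in>{1..N}. \<Sum>m\<in>{1..M}. of_real (f n * g n') * (if m^2 = n + n' then of_nat L else 0))"
    by (intro sum.cong refl) (simp add: 2)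
  also have "\<dots> = (\<Sum>n\<in>{1..N}. \<Sum>n'\<in>{1..N}. \<Sum>m\<in>{1..M}. of_nat L * of_real (if m^2 = n + n' then f n * g n' else 0))"
    by (intro sum.cong refl) auto
  also have "\<dots> = (\<Sum>n\<in>{1..N}. \<Sum>m\<in>{1..M}. \<Sum>n'\<in>{1..N}. of_nat L * of_real (if m^2 = n + n' then f n * g n' else 0))"
    by (rule sum.cong[OF refl]) (rule sum.swap)
  also have "\<dots> = (\<Sum>m\<in>{1..M}. \<Sum>n\<in>{1..N}. \<Sum>n'\<in>{1..N}. of_nat L * of_real (if m^2 = n + n' then f n * g n' else 0))"
    by (rule sum.swap)
  also have "\<dots> = of_nat L * of_real (\<Sum>m\<in>{1..M}. \<Sum>n\<in>{1..N}. \<Sum>n'\<in>{1..N}. if m^2 = n + n' then f n * g n' else 0)"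
    by (simp add: sum_distrib_left of_real_sum)
  finally show ?thesis .
qed

lemma conv_zero: "x > 2 * int N \<Longrightarrow> conv N f g x = 0"
  unfolding conv_def zext_def by (intro sum.neutral) auto

lemma zext_sum:
  "zext N g (int k - int n) = (\<Sum>n'\<in>{1..N}. if k = n + n' then g n' else 0)"
proof (cases "n < k \<and> k - n \<le> N")
  case True
  have "(\<Sum>n'\<in>{1..N}. if k = n + n' then g n' else 0) = (\<Sum>n'\<in>{1..N}. if n' = k - n then g n' else 0)"
    using True by (intro sum.cong refl) auto
  also have "\<dots> = g (k - n)" using True by (simp add: sum.delta' Suc_le_eq)
  moreover have "nat (int k - int n) = k - n" "1 \<le> int k - int n" "int k - int n \<le> int N"
    using True by auto
  ultimately show ?thesis unfolding zext_def by simp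
next
  case False
  have "(\<Sum>n'\<in>{1..N}. if k = n + n' then g n' else 0) = 0"
    using False by (intro sum.neutral) auto
  then show ?thesis using False unfolding zext_def by auto
qed

lemma conv_square:
  "conv N f g (int k) = (\<Sum>n\<in>{1..N}. \<Sum>n'\<in>{1..N}. if k = n + n' then f n * g n' else 0)"
proof -
  have b: "bij_betw int {1..N} {1..int N}"
  proof (rule bij_betwI')
    show "\<exists>x\<in>{1..N}. y = int x" if "y \<in> {1..int N}" for y
      using that by (intro bexI[of _ "nat y"]) auto
  qed auto
  have "conv N f g (int k) = (\<Sum>n\<in>{1..N}. zext N f (int n) * zext N g (int k - int n))"
    unfolding conv_def by (rule sum.reindex_bij_betw[OF b, symmetric])
  also have "\<dots> = (\<Sum>n\<in>{1..N}. f n * (\<Sum>n'\<in>{1..N}. if k = n + n' then g n' else 0))"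
  proof (intro sum.cong refl)
    fix n assume "n \<in> {1..N}"
    then have "zext N f (int n) = f n" by (simp add: zext_def)
    then show "zext N f (int n) * zext N g (int k - int n) = f n * (\<Sum>n'\<in>{1..N}. if k = n + n' then g n' else 0)"
      by (simp add: zext_sum)
  qed
  finally show ?thesis by (simp add: sum_distrib_left if_distrib cong: if_cong)
qed

lemma lhs_eq:
  fixes M N :: nat
  assumes M: "M^2 \<le> 2*N" "2*N < (Suc M)^2"
  shows "infsum (\<lambda>x. conv N f g x * indicator Sq x) {(1::int)..}
     = (\<Sum>m\<in>{1..M}. \<Sum>n\<in>{1..N}. \<Sum>n'\<in>{1..N}. if m^2 = n + n' then f n * g n' else 0)"
proof -
  define F where "F x = conv N f g x * indicator Sq x" for x
  have "infsum F {(1::int)..} = infsum F {1..2 * int N}"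
    by (rule infsum_cong_neutral) (auto simp: F_def conv_zero)
  also have "\<dots> = (\<Sum>x\<in>{1..2 * int N} \<inter> Sq. conv N f g x)"
    by (simp add: F_def indicator_def)
  also have "\<dots> = (\<Sum>m\<in>{1..M}. conv N f g (int (m^2)))"
  proof (rule sum.reindex_bij_betw[symmetric])
    show "bij_betw (\<lambda>m. int (m^2)) {1..M} ({1..2 * int N} \<inter> Sq)"
    proof (rule bij_betwI')
      show "(int (x^2) = int (y^2)) = (x = y)" for x y :: nat
        by (smt (verit) of_nat_0_le_iff of_nat_eq_iff of_nat_power power2_eq_iff)
      show "int (x^2) \<in> {1..2 * int N} \<inter> Sq" if "x \<in> {1..M}" for x
      proof -
        have "x^2 \<le> M^2" using that by (simp add: power_mono)
        moreover have "1 \<le> x^2" using that by simp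
        ultimately have "x^2 \<le> 2*N" "1 \<le> x^2" using M by linarith+
        then have "int (x^2) \<in> {1..2 * int N}"
          using of_nat_le_iff[of 1 "x^2"] of_nat_le_iff[of "x^2" "2*N"] by simp
        then show ?thesis unfolding Sq_def by auto
      qed
      show "\<exists>x\<in>{1..M}. y = int (x^2)" if "y \<in> {1..2 * int N} \<inter> Sq" for y
      proof -
        from that obtain m where m: "y = int (m^2)" unfolding Sq_def by auto
        have "int 1 \<le> int (m^2)" "int (m^2) \<le> int (2 * N)" using that m by auto
        then have "m^2 \<le> 2 * N" "1 \<le> m^2" by (simp only: of_nat_le_iff)+
        then have "m^2 < (Suc M)^2" "m \<noteq> 0" using M by (linarith, cases m, auto)
        then have "m < Suc M" using power_less_imp_less_base by blast
        then show ?thesis using m \<open>m \<noteq> 0\<close> by auto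
      qed
    qed
  qed
  also have "\<dots> = (\<Sum>m\<in>{1..M}. \<Sum>n\<in>{1..N}. \<Sum>n'\<in>{1..N}. if m^2 = n + n' then f n * g n' else 0)"
    by (intro sum.cong refl) (rule conv_square)
  finally show ?thesis unfolding F_def .
qed



definition nrm :: "real \<Rightarrow> real" where "nrm x = \<bar>x - of_int (round x)\<bar>"

lemma nrm_le: "nrm x \<le> \<bar>x - of_int n\<bar>"
  unfolding nrm_def by (rule round_diff_minimal)

lemma nrm_half: "nrm x \<le> 1/2"
  unfolding nrm_def using of_int_round_abs_le[of x] by linarith

lemma nrm_nonneg: "0 \<le> nrm x" unfolding nrm_def by simp

lemma nrm_ge: assumes "\<And>n::int. c \<le> \<bar>x - of_int n\<bar>" shows "c \<le> nrm x"
  unfolding nrm_def using assms .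

lemma nrm_shift: "nrm (x + of_int m) = nrm x"
proof (rule antisym)
  show "nrm (x + of_int m) \<le> nrm x"
    using nrm_le[of "x + of_int m" "round x + m"] unfolding nrm_def by simp
  show "nrm x \<le> nrm (x + of_int m)"
    using nrm_le[of x "round (x + of_int m) - m"] unfolding nrm_def by simp
qed

lemma nrm_add_ge: "nrm x - \<bar>y\<bar> \<le> nrm (x + y)"
proof -
  have "nrm x \<le> \<bar>x - of_int (round (x + y))\<bar>" by (rule nrm_le)
  also have "\<dots> \<le> \<bar>x + y - of_int (round (x + y))\<bar> + \<bar>y\<bar>" by linarith
  finally show ?thesis unfolding nrm_def by linarith
qed

lemma cos_lower: fixes x :: real assumes "0 \<le> x" shows "1 - x^2/2 \<le> cos x"
proof -
  let ?f = "\<lambda>u::real. u^2/2 - 1 + cos u"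
  have "?f 0 \<le> ?f x"
  proof (rule DERIV_nonneg_imp_nondecreasing[OF assms])
    fix u :: real assume "0 \<le> u" "u \<le> x"
    then show "\<exists>y. DERIV ?f u :> y \<and> y \<ge> 0"
      by (intro exI[of _ "u - sin u"]) (auto intro!: derivative_eq_intros simp: sin_x_le_x)
  qed
  then show ?thesis by simp
qed

lemma sin_lower: fixes x :: real assumes "0 \<le> x" shows "x - x^3/6 \<le> sin x"
proof -
  let ?f = "\<lambda>u::real. sin u - u + u^3/6"
  have "?f 0 \<le> ?f x"
  proof (rule DERIV_nonneg_imp_nondecreasing[OF assms])
    fix u :: real assume u: "0 \<le> u" "u \<le> x"
    show "\<exists>y. DERIV ?f u :> y \<and> y \<ge> 0"
      using cos_lower[OF u(1)]
      by (intro exI[of _ "cos u - 1 + u^2/2"]) (auto intro!: derivative_eq_intros simp: field_simps)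
  qed
  then show ?thesis by simp
qed

lemma sin_jordan: fixes x :: real assumes "0 \<le> x" "x \<le> pi/2" shows "x / pi \<le> sin x"
proof -
  have "x \<le> 2" using assms pi_less_4 by linarith
  then have "x^2 \<le> 2^2" by (rule power_mono) (use assms in auto)
  then have "x^2 \<le> 4" by simp
  have pi3: "pi > 3" by (rule pi_gt3)
  have "x / pi \<le> x / 3" by (rule divide_left_mono) (use pi3 assms in auto)
  also have "\<dots> \<le> x - x^3/6"
  proof -
    have "x * x^2 \<le> x * 4" using \<open>x^2 \<le> 4\<close> assms by (simp add: mult_left_mono)
    then show ?thesis by (simp add: power3_eq_cube power2_eq_square)
  qed
  also have "\<dots> \<le> sin x" using sin_lower assms by simp
  finally show ?thesis .
qed

lemma ee_1_lower: "2 * nrm \<alpha> \<le> norm (ee \<alpha> - 1)"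
proof -
  define t where "t = \<alpha> - of_int (round \<alpha>)"
  have nt: "nrm \<alpha> = \<bar>t\<bar>" unfolding nrm_def t_def ..
  have "\<bar>t\<bar> \<le> 1/2" using nrm_half[of \<alpha>] nt by simp
  have "ee \<alpha> = ee t * ee (of_int (round \<alpha>))" unfolding t_def by (simp add: ee_add[symmetric])
  then have "ee \<alpha> = ee t" by (simp add: ee_int)
  also have "ee t = exp (\<i> * of_real (2 * pi * t))" unfolding ee_def by (simp add: mult_ac)
  finally have eq: "ee \<alpha> = exp (\<i> * of_real (2 * pi * t))" .
  have "norm (ee \<alpha> - 1) = 2 * \<bar>sin (2 * pi * t / 2)\<bar>" unfolding eq by (rule dist_exp_i_1)
  also have "2 * pi * t / 2 = pi * t" by simp
  finally have e: "norm (ee \<alpha> - 1) = 2 * \<bar>sin (pi * t)\<bar>" .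
  have "\<bar>t\<bar> \<le> \<bar>sin (pi * t)\<bar>"
  proof (cases "t \<ge> 0")
    case True
    have "pi * t / pi \<le> sin (pi * t)"
      using \<open>\<bar>t\<bar> \<le> 1/2\<close> True by (intro sin_jordan) auto
    then show ?thesis using True by simp
  next
    case False
    have "0 \<le> -t" "-t \<le> 1/2" using \<open>\<bar>t\<bar> \<le> 1/2\<close> False by auto
    have a1: "0 \<le> pi * (-t)" using \<open>0 \<le> -t\<close> by (intro mult_nonneg_nonneg) auto
    have a2: "pi * (-t) \<le> pi * (1/2)" using \<open>-t \<le> 1/2\<close> by (intro mult_left_mono) auto
    have "pi * (-t) / pi \<le> sin (pi * (-t))" using a1 a2 by (intro sin_jordan) auto
    then show ?thesis using False by simp
  qed
  then show ?thesis using e nt by simp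
qed

lemma geo_triv: "norm (\<Sum>a\<in>{1..K}. ee (real a * \<alpha>)) \<le> real K"
proof -
  have "norm (\<Sum>a\<in>{1..K}. ee (real a * \<alpha>)) \<le> (\<Sum>a\<in>{1..K}. norm (ee (real a * \<alpha>)))"
    by (rule norm_sum)
  then show ?thesis by simp
qed

lemma geo_bound:
  assumes "nrm \<alpha> > 0"
  shows "norm (\<Sum>a\<in>{1..K}. ee (real a * \<alpha>)) \<le> 1 / nrm \<alpha>"
proof (cases "K = 0")
  case True then show ?thesis using assms by simp
next
  case False
  define z where "z = ee \<alpha>"
  have S: "(\<Sum>a\<in>{1..K}. ee (real a * \<alpha>)) = (\<Sum>a\<in>{1..K}. z ^ a)"
    unfolding z_def by (intro sum.cong refl) (rule ee_pow)
  have "(1 - z) * (\<Sum>a\<in>{1..K}. z ^ a) = z ^ 1 - z ^ Suc K"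
    using False by (intro sum_gp_multiplied) auto
  then have "norm (1 - z) * norm (\<Sum>a\<in>{1..K}. z ^ a) = norm (z ^ 1 - z ^ Suc K)"
    by (metis norm_mult)
  also have "\<dots> \<le> norm (z ^ 1) + norm (z ^ Suc K)" by (rule norm_triangle_ineq4)
  also have "\<dots> = 2" unfolding z_def by (simp only: norm_power norm_ee) simp
  finally have 1: "norm (1 - z) * norm (\<Sum>a\<in>{1..K}. z ^ a) \<le> 2" .
  have 2: "2 * nrm \<alpha> \<le> norm (1 - z)" unfolding z_def using ee_1_lower[of \<alpha>] by (simp add: norm_minus_commute)
  have "2 * nrm \<alpha> * norm (\<Sum>a\<in>{1..K}. z ^ a) \<le> 2"
    using 1 2 by (meson mult_right_mono norm_ge_zero order_trans)
  then have "norm (\<Sum>a\<in>{1..K}. z ^ a) \<le> 1 / nrm \<alpha>"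
    using assms by (simp add: field_simps)
  then show ?thesis using S by simp
qed

lemma restrict_less: "a \<le> M \<Longrightarrow> (\<Sum>b\<in>{1..M}. if a < b then F b else 0) = (\<Sum>h\<in>{1..M-a}. F (h + a))"
  for F :: "nat \<Rightarrow> 'b::comm_monoid_add"
proof -
  assume a: "a \<le> M"
  have "(\<Sum>b\<in>{1..M}. if a < b then F b else 0) = (\<Sum>b\<in>{b\<in>{1..M}. a < b}. F b)"
    by (rule sum.inter_filter[symmetric]) simp
  also have "{b\<in>{1..M}. a < b} = {1+a..(M-a)+a}" using a by auto
  also have "sum F {1+a..(M-a)+a} = (\<Sum>h\<in>{1..M-a}. F (h + a))" by (rule sum.shift_bounds_cl_nat_ivl)
  finally show ?thesis .
qed

lemma restrict_le: "(\<Sum>h\<in>{1..M}. if a + h \<le> M then F h else 0) = (\<Sum>h\<in>{1..M-a}. F h)"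
  for F :: "nat \<Rightarrow> 'b::comm_monoid_add"
proof -
  have "(\<Sum>h\<in>{1..M}. if a + h \<le> M then F h else 0) = (\<Sum>h\<in>{h\<in>{1..M}. a + h \<le> M}. F h)"
    by (rule sum.inter_filter[symmetric]) simp
  also have "{h\<in>{1..M}. a + h \<le> M} = {1..M-a}" by auto
  finally show ?thesis .
qed

lemma weyl:
  "(norm (W M \<theta>))^2 \<le> real M + 2 * (\<Sum>h\<in>{1..M}. norm (\<Sum>a\<in>{1..M-h}. ee (real a * (2 * real h * \<theta>))))"
proof -
  define G where "G a b = ee ((real (b^2) - real (a^2)) * \<theta>)" for a b :: nat
  define R where "R a b = Re (G a b)" for a b
  define S where "S h = (\<Sum>a\<in>{1..M-h}. ee (real a * (2 * real h * \<theta>)))" for h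
  have Rsym: "R b a = R a b" for a b
  proof -
    have "G b a = cnj (G a b)" unfolding G_def cnj_ee by (simp add: algebra_simps)
    then show ?thesis unfolding R_def by simp
  qed
  have "complex_of_real ((norm (W M \<theta>))^2) = cnj (W M \<theta>) * W M \<theta>"
    by (subst complex_norm_square) (simp add: mult.commute)
  also have "\<dots> = (\<Sum>a\<in>{1..M}. \<Sum>b\<in>{1..M}. G a b)"
  proof -
    have "cnj (W M \<theta>) * W M \<theta> = (\<Sum>a\<in>{1..M}. \<Sum>b\<in>{1..M}. ee (- (real (a^2) * \<theta>)) * ee (real (b^2) * \<theta>))"
      unfolding W_def by (simp add: sum_product cnj_ee)
    also have "\<dots> = (\<Sum>a\<in>{1..M}. \<Sum>b\<in>{1..M}. G a b)"
      unfolding G_def ee_add[symmetric] by (intro sum.cong refl) (simp add: algebra_simps)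
    finally show ?thesis .
  qed
  finally have n0: "complex_of_real ((norm (W M \<theta>))^2) = (\<Sum>a\<in>{1..M}. \<Sum>b\<in>{1..M}. G a b)" .
  have n1: "(norm (W M \<theta>))^2 = (\<Sum>a\<in>{1..M}. \<Sum>b\<in>{1..M}. R a b)"
  proof -
    have "(norm (W M \<theta>))^2 = Re (complex_of_real ((norm (W M \<theta>))^2))" by simp
    also have "\<dots> = Re (\<Sum>a\<in>{1..M}. \<Sum>b\<in>{1..M}. G a b)" by (simp only: n0)
    also have "\<dots> = (\<Sum>a\<in>{1..M}. \<Sum>b\<in>{1..M}. R a b)" by (simp add: Re_sum R_def)
    finally show ?thesis .
  qed
  have split: "R a b = (if a < b then R a b else 0) + (if b < a then R a b else 0) + (if a = b then R a b else 0)" for a b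
    by auto
  have "(\<Sum>a\<in>{1..M}. \<Sum>b\<in>{1..M}. R a b)
     = (\<Sum>a\<in>{1..M}. \<Sum>b\<in>{1..M}. if a < b then R a b else 0)
     + (\<Sum>a\<in>{1..M}. \<Sum>b\<in>{1..M}. if b < a then R a b else 0)
     + (\<Sum>a\<in>{1..M}. \<Sum>b\<in>{1..M}. if a = b then R a b else 0)"
    by (simp only: sum.distrib[symmetric] split[symmetric])
  also have "(\<Sum>a\<in>{1..M}. \<Sum>b\<in>{1..M}. if b < a then R a b else 0)
      = (\<Sum>a\<in>{1..M}. \<Sum>b\<in>{1..M}. if a < b then R a b else 0)"
    by (subst sum.swap) (simp only: Rsym)
  also have "(\<Sum>a\<in>{1..M}. \<Sum>b\<in>{1..M}. if a = b then R a b else 0) = (\<Sum>a\<in>{1..M}. R a a)"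
    by (simp add: sum.delta)
  also have "(\<Sum>a\<in>{1..M}. R a a) = real M" by (simp add: R_def G_def)
  finally have n2: "(norm (W M \<theta>))^2 = real M + 2 * (\<Sum>a\<in>{1..M}. \<Sum>b\<in>{1..M}. if a < b then R a b else 0)"
    using n1 by simp
  have "(\<Sum>a\<in>{1..M}. \<Sum>b\<in>{1..M}. if a < b then R a b else 0)
      = Re (\<Sum>a\<in>{1..M}. \<Sum>b\<in>{1..M}. if a < b then G a b else 0)"
    unfolding R_def by (simp add: Re_sum if_distrib cong: if_cong)
  also have "(\<Sum>a\<in>{1..M}. \<Sum>b\<in>{1..M}. if a < b then G a b else 0)
      = (\<Sum>a\<in>{1..M}. \<Sum>h\<in>{1..M}. if a + h \<le> M then G a (h + a) else 0)"
  proof (rule sum.cong[OF refl])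
    fix a assume "a \<in> {1..M}"
    then show "(\<Sum>b\<in>{1..M}. if a < b then G a b else 0) = (\<Sum>h\<in>{1..M}. if a + h \<le> M then G a (h + a) else 0)"
    proof -
      have "a \<le> M" using \<open>a \<in> {1..M}\<close> by simp
      then show ?thesis using restrict_less[OF \<open>a \<le> M\<close>, of "G a"] restrict_le[of a M "\<lambda>h. G a (h + a)"] by simp
    qed
  qed
  also have "\<dots> = (\<Sum>h\<in>{1..M}. \<Sum>a\<in>{1..M}. if h + a \<le> M then G a (h + a) else 0)"
    by (subst sum.swap) (simp add: add.commute)
  also have "\<dots> = (\<Sum>h\<in>{1..M}. ee (real (h^2) * \<theta>) * S h)"
  proof (intro sum.cong refl)
    fix h
    have e: "G a (h + a) = ee (real (h^2) * \<theta>) * ee (real a * (2 * real h * \<theta>))" for a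
      unfolding G_def ee_add[symmetric] by (simp add: algebra_simps power2_eq_square)
    show "(\<Sum>a\<in>{1..M}. if h + a \<le> M then G a (h + a) else 0) = ee (real (h^2) * \<theta>) * S h"
    proof -
      have "(\<Sum>a\<in>{1..M}. if h + a \<le> M then G a (h + a) else 0) = (\<Sum>a\<in>{1..M-h}. G a (h + a))"
        by (rule restrict_le)
      also have "\<dots> = ee (real (h^2) * \<theta>) * S h"
        unfolding S_def sum_distrib_left by (simp only: e)
      finally show ?thesis .
    qed
  qed
  finally have "(\<Sum>a\<in>{1..M}. \<Sum>b\<in>{1..M}. if a < b then R a b else 0) = Re (\<Sum>h\<in>{1..M}. ee (real (h^2) * \<theta>) * S h)" .
  also have "\<dots> \<le> norm (\<Sum>h\<in>{1..M}. ee (real (h^2) * \<theta>) * S h)" by (rule complex_Re_le_cmod)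
  also have "\<dots> \<le> (\<Sum>h\<in>{1..M}. norm (ee (real (h^2) * \<theta>) * S h))" by (rule norm_sum)
  also have "\<dots> = (\<Sum>h\<in>{1..M}. norm (S h))" by (simp add: norm_mult)
  finally show ?thesis using n2 unfolding S_def by simp
qed




lemma sum_inv_sqrt: "(\<Sum>j\<in>{1..n}. 1 / sqrt (real j)) \<le> 2 * sqrt (real n)"
proof (induction n)
  case 0 then show ?case by simp
next
  case (Suc n)
  define s where "s = sqrt (real n)"
  define u where "u = sqrt (real (Suc n))"
  have s2: "s^2 = real n" unfolding s_def by simp
  have u2: "u^2 = real n + 1" unfolding u_def by simp
  have upos: "u > 0" unfolding u_def by simp
  have s0: "s \<ge> 0" unfolding s_def by simp
  have "0 \<le> (s - u)^2" by simp
  then have "2 * s * u \<le> s^2 + u^2" unfolding power2_diff by linarith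
  then have key: "2 * s * u + 1 \<le> 2 * u^2" using s2 u2 by simp
  have "2 * s + 1 / u \<le> 2 * u"
  proof -
    have "(2 * s + 1 / u) * u = 2 * s * u + 1" using upos by (simp add: field_simps)
    also have "\<dots> \<le> 2 * u * u" using key by (simp add: power2_eq_square)
    finally show ?thesis using upos by (meson mult_le_cancel_right_pos)
  qed
  have "(\<Sum>j\<in>{1..Suc n}. 1 / sqrt (real j)) = (\<Sum>j\<in>{1..n}. 1 / sqrt (real j)) + 1 / u"
    unfolding u_def by simp
  also have "\<dots> \<le> 2 * s + 1 / u" using Suc.IH unfolding s_def by simp
  also have "\<dots> \<le> 2 * u" by fact
  finally show ?case unfolding u_def .
qed

lemma sum_inv: "(\<Sum>j\<in>{1..n}. 1 / real j) \<le> 2 * sqrt (real n)"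
proof -
  have "(\<Sum>j\<in>{1..n}. 1 / real j) \<le> (\<Sum>j\<in>{1..n}. 1 / sqrt (real j))"
  proof (rule sum_mono)
    fix j assume "j \<in> {1..n}"
    then have j1: "1 \<le> sqrt (real j)" by simp
    then have "sqrt (real j) * 1 \<le> sqrt (real j) * sqrt (real j)" by (intro mult_left_mono) auto
    then have "sqrt (real j) \<le> real j" "0 < sqrt (real j)" using j1 by auto
    then show "1 / real j \<le> 1 / sqrt (real j)" by (simp add: frac_le)
  qed
  also have "\<dots> \<le> 2 * sqrt (real n)" by (rule sum_inv_sqrt)
  finally show ?thesis .
qed

lemma nrm_frac:
  fixes b :: int and q :: nat
  assumes q: "q > 0" and nd: "\<not> int q dvd b"
  shows "real (min (nat (b mod int q)) (q - nat (b mod int q))) / real q \<le> nrm (of_int b / real q)"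
    and "1 / real q \<le> nrm (of_int b / real q)"
    and "nat (b mod int q) \<in> {1..q-1}"
proof -
  define s where "s = b mod int q"
  define d where "d = b div int q"
  have bs: "b = int q * d + s" unfolding s_def d_def by simp
  have s1: "0 \<le> s" "s < int q" unfolding s_def using q by auto
  have s0: "s \<noteq> 0" using nd unfolding s_def by (simp add: dvd_eq_mod_eq_0)
  have lb: "real (min (nat s) (q - nat s)) \<le> \<bar>of_int b - of_int n * real q\<bar>" for n :: int
  proof (cases "d - n \<ge> 0")
    case True
    have "of_int b - of_int n * real q = of_int s + real q * of_int (d - n)"
      using bs by (simp add: algebra_simps)
    moreover have "0 \<le> real q * of_int (d - n)" using True by simp
    ultimately have "real_of_int s \<le> \<bar>of_int b - of_int n * real q\<bar>" using s1 by linarith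
    moreover have "real (min (nat s) (q - nat s)) \<le> real (nat s)" by simp
    moreover have "real (nat s) = of_int s" using s1 by simp
    ultimately show ?thesis by linarith
  next
    case False
    then have "d - n \<le> -1" by simp
    then have "real q * of_int (d - n) \<le> real q * (-1)" by (intro mult_left_mono) auto
    moreover have "of_int b - of_int n * real q = of_int s + real q * of_int (d - n)"
      using bs by (simp add: algebra_simps)
    ultimately have "real q - of_int s \<le> \<bar>of_int b - of_int n * real q\<bar>" by linarith
    moreover have "real (min (nat s) (q - nat s)) \<le> real (q - nat s)" by simp
    moreover have "real (q - nat s) = real q - of_int s" using s1 by (simp add: of_nat_diff)
    ultimately show ?thesis by linarith
  qed
  show A: "real (min (nat (b mod int q)) (q - nat (b mod int q))) / real q \<le> nrm (of_int b / real q)"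
  proof (rule nrm_ge)
    fix n :: int
    have "\<bar>of_int b / real q - of_int n\<bar> = \<bar>of_int b - of_int n * real q\<bar> / real q"
      using q by (simp add: field_simps abs_divide)
    then show "real (min (nat (b mod int q)) (q - nat (b mod int q))) / real q \<le> \<bar>of_int b / real q - of_int n\<bar>"
      using lb[of n] q unfolding s_def by (simp add: divide_right_mono)
  qed
  have "1 \<le> min (nat s) (q - nat s)" using s0 s1 by auto
  then have "1 / real q \<le> real (min (nat s) (q - nat s)) / real q"
    using q by (simp add: divide_right_mono)
  then show "1 / real q \<le> nrm (of_int b / real q)" using A unfolding s_def by linarith
  show "nat (b mod int q) \<in> {1..q-1}" using s0 s1 unfolding s_def by auto
qed

lemma sum_periodic:
  fixes \<phi> :: "nat \<Rightarrow> real"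
  assumes per: "\<And>k. \<phi> (k + q) = \<phi> k"
  shows "(\<Sum>k\<in>{0..<q*n}. \<phi> k) = real n * (\<Sum>k\<in>{0..<q}. \<phi> k)"
proof (induction n)
  case 0 then show ?case by simp
next
  case (Suc n)
  have per2: "\<phi> (t + q * n) = \<phi> t" for t
  proof (induction n)
    case 0 then show ?case by simp
  next
    case (Suc n)
    have "\<phi> (t + q * Suc n) = \<phi> ((t + q * n) + q)" by (simp add: algebra_simps)
    also have "\<dots> = \<phi> (t + q * n)" by (rule per)
    finally show ?case using Suc by simp
  qed
  have "(\<Sum>k\<in>{0..<q*Suc n}. \<phi> k) = (\<Sum>k\<in>{0..<q*n}. \<phi> k) + (\<Sum>k\<in>{q*n..<q*Suc n}. \<phi> k)"
    by (rule sum.atLeastLessThan_concat[symmetric]) auto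
  also have "(\<Sum>k\<in>{q*n..<q*Suc n}. \<phi> k) = (\<Sum>k\<in>{0+q*n..<q+q*n}. \<phi> k)" by (simp add: algebra_simps)
  also have "\<dots> = (\<Sum>t\<in>{0..<q}. \<phi> (t + q * n))" by (rule sum.shift_bounds_nat_ivl)
  also have "\<dots> = (\<Sum>t\<in>{0..<q}. \<phi> t)" by (simp add: per2)
  finally show ?case using Suc.IH by (simp add: algebra_simps)
qed

lemma sum_reflect: "(\<Sum>s\<in>{1..q-1}. f (q - s)) = (\<Sum>s\<in>{1..q-1}. f s)" for f :: "nat \<Rightarrow> real"
  by (rule sum.reindex_bij_witness[where i="\<lambda>s. q - s" and j="\<lambda>s. q - s"]) auto

definition phi :: "nat \<Rightarrow> int \<Rightarrow> nat \<Rightarrow> real" where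
  "phi q a k = (if q dvd k then 0 else 1 / nrm (real k * of_int a / real q))"

lemma phi_nonneg: "0 \<le> phi q a k"
  unfolding phi_def using nrm_nonneg by simp

lemma phi_periodic: "phi q a (k + q) = phi q a k"
proof (cases "q = 0")
  case True then show ?thesis by simp
next
  case False
  have "real (k + q) * of_int a / real q = real k * of_int a / real q + of_int a"
    using False by (simp add: field_simps)
  then show ?thesis unfolding phi_def by (simp add: nrm_shift)
qed

lemma inner_bound:
  fixes q :: nat and a :: int
  assumes q: "q > 0" and cop: "coprime a (int q)"
  shows "(\<Sum>t\<in>{0..<q}. phi q a t) \<le> 4 * real q * sqrt (real q)"
proof -
  define \<sigma> where "\<sigma> t = nat ((int t * a) mod int q)" for t
  have cop': "coprime (int q) a" using cop by (simp add: coprime_commute)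
  have nd: "\<not> int q dvd int t * a" if "t \<in> {1..q-1}" for t
  proof
    assume "int q dvd int t * a"
    then have "int q dvd int t" using coprime_dvd_mult_left_iff[OF cop'] by simp
    then have "q dvd t" by simp
    then show False using that by (auto dest: dvd_imp_le)
  qed
  have bnd: "phi q a t \<le> real q / real (\<sigma> t) + real q / real (q - \<sigma> t)" if t: "t \<in> {1..q-1}" for t
  proof -
    have ndt: "\<not> q dvd t" using t by (auto dest: dvd_imp_le)
    have e: "real t * of_int a / real q = of_int (int t * a) / real q" by simp
    have m: "real (min (\<sigma> t) (q - \<sigma> t)) / real q \<le> nrm (real t * of_int a / real q)"
      unfolding e \<sigma>_def by (rule nrm_frac(1)[OF q nd[OF t]])
    have sr: "\<sigma> t \<in> {1..q-1}" unfolding \<sigma>_def by (rule nrm_frac(3)[OF q nd[OF t]])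
    then have m1: "1 \<le> min (\<sigma> t) (q - \<sigma> t)" by auto
    then have "0 < real (min (\<sigma> t) (q - \<sigma> t))" by linarith
    then have mpos: "0 < real (min (\<sigma> t) (q - \<sigma> t)) / real q" using q by simp
    have "phi q a t = 1 / nrm (real t * of_int a / real q)" unfolding phi_def using ndt by simp
    also have "\<dots> \<le> 1 / (real (min (\<sigma> t) (q - \<sigma> t)) / real q)"
    proof -
      have xp: "0 < nrm (real t * of_int a / real q)" using m mpos by linarith
      have "0 < nrm (real t * of_int a / real q) * (real (min (\<sigma> t) (q - \<sigma> t)) / real q)"
        by (rule mult_pos_pos[OF xp mpos])
      then show ?thesis using m by (intro divide_left_mono) auto
    qed
    also have "\<dots> = real q / real (min (\<sigma> t) (q - \<sigma> t))" by simp
    also have "\<dots> \<le> real q / real (\<sigma> t) + real q / real (q - \<sigma> t)"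
    proof (cases "\<sigma> t \<le> q - \<sigma> t")
      case True
      then show ?thesis using sr by (simp add: min_def)
    next
      case False
      then show ?thesis using sr by (simp add: min_def)
    qed
    finally show ?thesis .
  qed
  have inj: "inj_on \<sigma> {1..q-1}"
  proof (rule inj_onI)
    fix t1 t2 assume t1: "t1 \<in> {1..q-1}" and t2: "t2 \<in> {1..q-1}" and eq: "\<sigma> t1 = \<sigma> t2"
    have "(int t1 * a) mod int q = (int t2 * a) mod int q"
      using eq q unfolding \<sigma>_def by (metis Euclidean_Rings.pos_mod_sign eq_nat_nat_iff of_nat_0_less_iff)
    then have "int q dvd int t1 * a - int t2 * a" by (simp add: mod_eq_dvd_iff)
    then have "int q dvd (int t1 - int t2) * a" by (simp add: algebra_simps)
    then have d: "int q dvd (int t1 - int t2)" using coprime_dvd_mult_left_iff[OF cop'] by simp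
    show "t1 = t2"
    proof (rule ccontr)
      assume "t1 \<noteq> t2"
      then have "int t1 - int t2 \<noteq> 0" by simp
      from dvd_imp_le_int[OF this d] have "int q \<le> \<bar>int t1 - int t2\<bar>" by simp
      then show False using t1 t2 by auto
    qed
  qed
  have img: "\<sigma> ` {1..q-1} \<subseteq> {1..q-1}"
    using nrm_frac(3)[OF q nd] unfolding \<sigma>_def by auto
  define \<psi> where "\<psi> s = real q / real s + real q / real (q - s)" for s
  have "(\<Sum>t\<in>{0..<q}. phi q a t) = (\<Sum>t\<in>{1..q-1}. phi q a t)"
  proof -
    have "{0..<q} = insert 0 {1..q-1}" using q by auto
    then show ?thesis by (simp add: phi_def)
  qed
  also have "\<dots> \<le> (\<Sum>t\<in>{1..q-1}. \<psi> (\<sigma> t))" unfolding \<psi>_def by (intro sum_mono bnd)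
  also have "\<dots> = (\<Sum>s\<in>\<sigma> ` {1..q-1}. \<psi> s)" using sum.reindex[OF inj, of \<psi>] by simp
  also have "\<dots> \<le> (\<Sum>s\<in>{1..q-1}. \<psi> s)"
    by (rule sum_mono2[OF _ img]) (auto simp: \<psi>_def)
  also have "\<dots> = real q * (\<Sum>s\<in>{1..q-1}. 1 / real s) + real q * (\<Sum>s\<in>{1..q-1}. 1 / real (q - s))"
    unfolding \<psi>_def by (simp add: sum.distrib sum_distrib_left)
  also have "(\<Sum>s\<in>{1..q-1}. 1 / real (q - s)) = (\<Sum>s\<in>{1..q-1}. 1 / real s)"
    by (rule sum_reflect[where f="\<lambda>s. 1 / real s"])
  also have "real q * (\<Sum>s\<in>{1..q-1}. 1 / real s) + real q * (\<Sum>s\<in>{1..q-1}. 1 / real s)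
      = 2 * real q * (\<Sum>s\<in>{1..q-1}. 1 / real s)" by simp
  also have "\<dots> \<le> 2 * real q * (2 * sqrt (real (q - 1)))"
    by (intro mult_left_mono sum_inv) auto
  also have "\<dots> \<le> 2 * real q * (2 * sqrt (real q))"
    by (intro mult_left_mono) auto
  finally show ?thesis by simp
qed

lemma partI:
  fixes q M :: nat and a :: int
  assumes q: "q > 0" and cop: "coprime a (int q)" and qM: "q \<le> 4 * M"
  shows "(\<Sum>h\<in>{1..M}. phi q a (2 * h)) \<le> 48 * real M * sqrt (real M)"
proof -
  define J where "J = 2 * M div q"
  have qJ: "q * J \<le> 2 * M" unfolding J_def by (rule times_div_less_eq_dividend)
  have lt: "2 * M < q * (J + 1)"
  proof -
    have "2 * M = q * J + 2 * M mod q" unfolding J_def by simp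
    moreover have "2 * M mod q < q" using q by simp
    ultimately show ?thesis by (simp add: algebra_simps)
  qed
  have inj: "inj_on (\<lambda>h. 2 * h) {1..M}" by (auto simp: inj_on_def)
  have "(\<Sum>h\<in>{1..M}. phi q a (2 * h)) = (\<Sum>k\<in>(\<lambda>h. 2 * h) ` {1..M}. phi q a k)"
    using sum.reindex[OF inj, of "phi q a"] by simp
  also have "\<dots> \<le> (\<Sum>k\<in>{0..<q * (J + 1)}. phi q a k)"
    by (rule sum_mono2) (use lt in \<open>auto simp: phi_nonneg\<close>)
  also have "\<dots> = real (J + 1) * (\<Sum>k\<in>{0..<q}. phi q a k)"
    by (rule sum_periodic) (rule phi_periodic)
  also have "\<dots> \<le> real (J + 1) * (4 * real q * sqrt (real q))"
    by (intro mult_left_mono inner_bound q cop) auto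
  also have "\<dots> = 4 * (real (J + 1) * real q) * sqrt (real q)" by simp
  also have "\<dots> \<le> 4 * (6 * real M) * (2 * sqrt (real M))"
  proof -
    have "real (J + 1) * real q = real (q * J) + real q" by (simp add: algebra_simps)
    also have "\<dots> \<le> 2 * real M + 4 * real M"
    proof -
      have "real (q * J) \<le> real (2 * M)" "real q \<le> real (4 * M)" using qJ qM by (simp only: of_nat_le_iff)+
      then show ?thesis by simp
    qed
    finally have 1: "real (J + 1) * real q \<le> 6 * real M" by simp
    have "sqrt (real q) \<le> sqrt (4 * real M)" using qM by simp
    also have "\<dots> = 2 * sqrt (real M)" by (simp add: real_sqrt_mult)
    finally have 2: "sqrt (real q) \<le> 2 * sqrt (real M)" .
    have "(real (J + 1) * real q) * sqrt (real q) \<le> (6 * real M) * (2 * sqrt (real M))"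
      by (rule mult_mono[OF 1 2]) auto
    then have "4 * ((real (J + 1) * real q) * sqrt (real q)) \<le> 4 * ((6 * real M) * (2 * sqrt (real M)))" by (simp add: algebra_simps)
    then show ?thesis by (simp only: mult.assoc)
  qed
  finally show ?thesis by simp
qed



lemma min_le_sqrt: fixes x y :: real assumes "0 \<le> x" "0 \<le> y" shows "min x y \<le> sqrt (x * y)"
proof (cases "x \<le> y")
  case True
  have "min x y = sqrt (x * x)" using True assms by simp
  also have "\<dots> \<le> sqrt (x * y)" using True assms by (intro real_sqrt_le_mono mult_left_mono) auto
  finally show ?thesis .
next
  case False
  have "min x y = sqrt (y * y)" using False assms by simp
  also have "\<dots> \<le> sqrt (x * y)" using False assms by (intro real_sqrt_le_mono mult_right_mono) auto
  finally show ?thesis .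
qed

lemma partII:
  fixes T :: "nat \<Rightarrow> real" and q M N Q :: nat and \<beta> :: real
  assumes q: "q > 0" and M1: "1 \<le> M" and MN: "(real M)^2 \<le> 2 * real N" and Q1: "1 \<le> Q"
    and T1: "\<And>h. h \<in> {1..M} \<Longrightarrow> T h \<le> real M"
    and T2: "\<And>h. h \<in> {1..M} \<Longrightarrow> q dvd 2 * h \<Longrightarrow> \<beta> \<noteq> 0 \<Longrightarrow> T h \<le> 1 / (real (2 * h) * \<bar>\<beta>\<bar>)"
    and cases: "Q < q \<or> (\<beta> \<noteq> 0 \<and> real Q ^ 2 / real N < \<bar>\<beta>\<bar>)"
  shows "(\<Sum>h\<in>{h\<in>{1..M}. q dvd 2 * h}. T h) \<le> 4 * real N / real Q"
proof -
  define H where "H = {h\<in>{1..M}. q dvd 2 * h}"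
  define J where "J = 2 * M div q"
  define j where "j h = 2 * h div q" for h
  have "1 \<le> (real M)^2" using M1 by simp
  then have N0: "real N > 0" using MN by linarith
  have qJ: "real q * real J \<le> 2 * real M"
  proof -
    have "q * J \<le> 2 * M" unfolding J_def by (rule times_div_less_eq_dividend)
    then have "real (q * J) \<le> real (2 * M)" by (simp only: of_nat_le_iff)
    then show ?thesis by simp
  qed
  have jh: "real (2 * h) = real q * real (j h)" if "h \<in> H" for h
  proof -
    have "q dvd 2 * h" using that unfolding H_def by simp
    then have "2 * h = q * j h" unfolding j_def by simp
    then show ?thesis by (metis of_nat_mult)
  qed
  have injj: "inj_on j H"
  proof (rule inj_onI)
    fix x y assume "x \<in> H" "y \<in> H" "j x = j y"
    then have "real (2 * x) = real (2 * y)" using jh by metis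
    then show "x = y" by simp
  qed
  have imgj: "j ` H \<subseteq> {1..J}"
  proof
    fix z assume "z \<in> j ` H"
    then obtain h where h: "h \<in> H" "z = j h" by auto
    have "h \<ge> 1" "h \<le> M" using h unfolding H_def by auto
    have "real (2 * h) = real q * real z" using jh h by simp
    then have "z \<noteq> 0"
    proof (intro notI)
      assume "real (2 * h) = real q * real z" "z = 0"
      then have "real (2 * h) = 0" by simp
      then show False using \<open>h \<ge> 1\<close> by simp
    qed
    moreover have "z \<le> J" unfolding h J_def j_def using \<open>h \<le> M\<close> by (simp add: div_le_mono)
    ultimately show "z \<in> {1..J}" by auto
  qed
  from cases show ?thesis
  proof
    assume qQ: "Q < q"
    have "(\<Sum>h\<in>H. T h) \<le> (\<Sum>h\<in>H. real M)" by (rule sum_mono) (use T1 in \<open>auto simp: H_def\<close>)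
    also have "\<dots> = real (card H) * real M" by simp
    also have "card H \<le> J"
    proof -
      have "card H \<le> card {1..J}" by (rule card_inj_on_le[OF injj imgj]) simp
      then show ?thesis by simp
    qed
    then have "real (card H) * real M \<le> real J * real M" by (intro mult_right_mono) auto
    also have "real J * real M \<le> (2 * real M / real q) * real M"
    proof (intro mult_right_mono)
      show "real J \<le> 2 * real M / real q" using qJ q by (simp add: field_simps)
    qed auto
    also have "\<dots> \<le> (2 * real M / real Q) * real M"
    proof (intro mult_right_mono divide_left_mono)
      show "real Q \<le> real q" using qQ by simp
    qed (use Q1 q in auto)
    also have "\<dots> = 2 * (real M)^2 / real Q" by (simp add: power2_eq_square)
    also have "\<dots> \<le> 2 * (2 * real N) / real Q" using MN Q1 by (intro divide_right_mono) auto
    finally show ?thesis unfolding H_def by simp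
  next
    assume bc: "\<beta> \<noteq> 0 \<and> real Q ^ 2 / real N < \<bar>\<beta>\<bar>"
    have bpos: "\<bar>\<beta>\<bar> > 0" using bc by simp
    define c where "c = sqrt (real M / (real q * \<bar>\<beta>\<bar>))"
    have c0: "0 \<le> c" unfolding c_def by simp
    have Th: "T h \<le> c / sqrt (real (j h))" if "h \<in> H" for h
    proof -
      have h: "h \<in> {1..M}" "q dvd 2 * h" using that unfolding H_def by auto
      have "T h \<le> min (real M) (1 / (real (2 * h) * \<bar>\<beta>\<bar>))" using T1[OF h(1)] T2[OF h(1) h(2)] bc by simp
      also have "\<dots> \<le> sqrt (real M * (1 / (real (2 * h) * \<bar>\<beta>\<bar>)))" by (rule min_le_sqrt) auto
      also have "real M * (1 / (real (2 * h) * \<bar>\<beta>\<bar>)) = (real M / (real q * \<bar>\<beta>\<bar>)) / real (j h)"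
        using jh[OF that] by (simp add: field_simps)
      also have "sqrt \<dots> = c / sqrt (real (j h))" unfolding c_def by (simp add: real_sqrt_divide real_sqrt_mult)
      finally show ?thesis .
    qed
    have "(\<Sum>h\<in>H. T h) \<le> (\<Sum>h\<in>H. c / sqrt (real (j h)))" by (intro sum_mono Th)
    also have "\<dots> = (\<Sum>z\<in>j ` H. c / sqrt (real z))" using sum.reindex[OF injj, of "\<lambda>z. c / sqrt (real z)"] by simp
    also have "\<dots> \<le> (\<Sum>z\<in>{1..J}. c / sqrt (real z))" by (rule sum_mono2[OF _ imgj]) (use c0 in auto)
    also have "\<dots> = c * (\<Sum>z\<in>{1..J}. 1 / sqrt (real z))" by (simp add: sum_distrib_left)
    also have "\<dots> \<le> c * (2 * sqrt (real J))" by (intro mult_left_mono sum_inv_sqrt c0)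
    also have "\<dots> \<le> 4 * real N / real Q"
    proof (rule power2_le_imp_le)
      show "0 \<le> 4 * real N / real Q" by simp
      have "(c * (2 * sqrt (real J)))^2 = (real M / (real q * \<bar>\<beta>\<bar>)) * (4 * real J)"
        unfolding c_def by (simp add: power_mult_distrib)
      also have "\<dots> = 4 * real M * (real q * real J) / (real q ^ 2 * \<bar>\<beta>\<bar>)"
        using q by (simp add: field_simps power2_eq_square)
      also have "\<dots> \<le> 4 * real M * (2 * real M) / (real q ^ 2 * \<bar>\<beta>\<bar>)"
        using qJ q bpos by (intro divide_right_mono mult_left_mono) auto
      also have "\<dots> \<le> 4 * real M * (2 * real M) / (1 * \<bar>\<beta>\<bar>)"
      proof (rule divide_left_mono)
        have "1 \<le> real q ^ 2" using q by simp
        then show "1 * \<bar>\<beta>\<bar> \<le> real q ^ 2 * \<bar>\<beta>\<bar>" using bpos by (intro mult_right_mono) auto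
      qed (use bpos q in \<open>auto intro!: mult_pos_pos\<close>)
      also have "\<dots> = 8 * (real M)^2 * (1 / \<bar>\<beta>\<bar>)" by (simp add: power2_eq_square)
      also have "\<dots> \<le> 8 * (2 * real N) * (real N / real Q ^ 2)"
      proof (intro mult_mono)
        have "real Q ^ 2 / real N < \<bar>\<beta>\<bar>" using bc by simp
        then have lt: "real Q ^ 2 < \<bar>\<beta>\<bar> * real N" using N0 by (simp add: divide_less_eq)
        have Qp: "0 < real Q ^ 2" using Q1 by simp
        show "1 / \<bar>\<beta>\<bar> \<le> real N / real Q ^ 2"
          using lt Qp bpos by (simp add: divide_simps mult.commute)
      qed (use MN in auto)
      also have "\<dots> = (4 * real N / real Q)^2" by (simp add: power2_eq_square field_simps)
      finally show "(c * (2 * sqrt (real J)))^2 \<le> (4 * real N / real Q)^2" .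
    qed
    finally show ?thesis unfolding H_def by simp
  qed
qed



lemma nrm_small: assumes "\<bar>x\<bar> \<le> 1/2" shows "nrm x = \<bar>x\<bar>"
proof (rule antisym)
  show "nrm x \<le> \<bar>x\<bar>" using nrm_le[of x 0] by simp
  show "\<bar>x\<bar> \<le> nrm x"
  proof (rule nrm_ge)
    fix n :: int
    show "\<bar>x\<bar> \<le> \<bar>x - of_int n\<bar>"
    proof (cases "n = 0")
      case True then show ?thesis by simp
    next
      case False
      then have "1 \<le> \<bar>real_of_int n\<bar>" by linarith
      then show ?thesis using assms by linarith
    qed
  qed
qed

lemma minor_sum_bound:
  fixes M N Q :: nat and \<theta> :: real
  assumes M1: "1 \<le> M" and MN: "(real M)^2 \<le> 2 * real N" and Q1: "1 \<le> Q"
    and minor: "\<And>(a::int) (q::nat). 1 \<le> q \<Longrightarrow> q \<le> Q \<Longrightarrow> real Q ^ 2 / real N < \<bar>\<theta> - of_int a / real q\<bar>"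
  shows "(\<Sum>h\<in>{1..M}. norm (\<Sum>a\<in>{1..M-h}. ee (real a * (2 * real h * \<theta>))))
     \<le> 96 * real M * sqrt (real M) + 4 * real N / real Q"
proof -
  have "0 < 4 * M" using M1 by simp
  then obtain a k where cop: "coprime a k" and k0: "0 < k" and kle: "k \<le> int (4 * M)"
    and app: "\<bar>of_int k * \<theta> - of_int a\<bar> < 1 / real (4 * M)"
    by (rule Dirichlet_approx_coprime)
  define q where "q = nat k"
  have kq: "k = int q" unfolding q_def using k0 by simp
  have q0: "q > 0" and q4: "q \<le> 4 * M" using k0 kle kq by auto
  have copq: "coprime a (int q)" using cop kq by simp
  define \<beta> where "\<beta> = \<theta> - of_int a / real q"
  have qb: "real q * \<beta> = of_int k * \<theta> - of_int a" unfolding \<beta>_def kq using q0 by (simp add: field_simps)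
  have qbl: "real q * \<bar>\<beta>\<bar> < 1 / (4 * real M)" using app qb q0 by (simp add: abs_mult)
  define T where "T h = norm (\<Sum>a\<in>{1..M-h}. ee (real a * (2 * real h * \<theta>)))" for h
  have T1: "T h \<le> real M" if "h \<in> {1..M}" for h
  proof -
    have "T h \<le> real (M - h)" unfolding T_def by (rule geo_triv)
    also have "\<dots> \<le> real M" by simp
    finally show ?thesis .
  qed
  have small: "\<bar>real (2 * h) * \<beta>\<bar> \<le> 1 / (2 * real q)" if "h \<in> {1..M}" for h
  proof -
    have "\<bar>real (2 * h) * \<beta>\<bar> = real (2 * h) * \<bar>\<beta>\<bar>" by (simp add: abs_mult)
    also have "\<dots> \<le> (2 * real M) * \<bar>\<beta>\<bar>" using that by (intro mult_right_mono) auto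
    also have "\<dots> = (2 * real M) * (real q * \<bar>\<beta>\<bar>) / real q" using q0 by simp
    also have "\<dots> \<le> (2 * real M) * (1 / (4 * real M)) / real q"
      using qbl q0 M1 by (intro divide_right_mono mult_left_mono) auto
    also have "\<dots> = 1 / (2 * real q)" using M1 by simp
    finally show ?thesis .
  qed
  have decomp: "2 * real h * \<theta> = real (2 * h) * of_int a / real q + real (2 * h) * \<beta>" for h
    unfolding \<beta>_def using q0 by (simp add: field_simps)
  have C1: "T h \<le> 2 * phi q a (2 * h)" if h: "h \<in> {1..M}" and nd: "\<not> q dvd 2 * h" for h
  proof -
    define b where "b = int (2 * h) * a"
    have ndb: "\<not> int q dvd b"
    proof
      assume "int q dvd b"
      then have "int q dvd int (2 * h)" unfolding b_def
        using coprime_dvd_mult_left_iff[of "int q" a "int (2*h)"] copq by (simp add: coprime_commute)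
      then show False using nd int_dvd_int_iff by blast
    qed
    have eb: "real (2 * h) * of_int a / real q = of_int b / real q" unfolding b_def by simp
    define x where "x = nrm (real (2 * h) * of_int a / real q)"
    have x1: "1 / real q \<le> x" unfolding x_def eb by (rule nrm_frac(2)[OF q0 ndb])
    have "x - \<bar>real (2 * h) * \<beta>\<bar> \<le> nrm (2 * real h * \<theta>)"
      unfolding x_def decomp by (rule nrm_add_ge)
    then have y: "x / 2 \<le> nrm (2 * real h * \<theta>)" using small[OF h] x1 by linarith
    have xp: "0 < x" using x1 q0 by (smt (verit) divide_pos_pos of_nat_0_less_iff)
    have "T h \<le> 1 / nrm (2 * real h * \<theta>)" unfolding T_def
      by (rule geo_bound) (use y xp in linarith)
    also have "\<dots> \<le> 1 / (x / 2)" using y xp by (intro divide_left_mono) (auto intro!: mult_pos_pos)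
    also have "\<dots> = 2 * phi q a (2 * h)" unfolding phi_def x_def using nd by simp
    finally show ?thesis .
  qed
  have C2: "T h \<le> 1 / (real (2 * h) * \<bar>\<beta>\<bar>)" if h: "h \<in> {1..M}" and d: "q dvd 2 * h" and b0: "\<beta> \<noteq> 0" for h
  proof -
    obtain m where m: "2 * h = q * m" using d by (auto elim: dvdE)
    have "real (2 * h) * of_int a / real q = of_int (int m * a)" using m q0 by simp
    then have "nrm (2 * real h * \<theta>) = nrm (real (2 * h) * \<beta>)"
      unfolding decomp using nrm_shift[of "real (2 * h) * \<beta>" "int m * a"] by (simp add: add.commute)
    also have "\<dots> = \<bar>real (2 * h) * \<beta>\<bar>"
    proof (rule nrm_small)
      have "1 / (2 * real q) \<le> 1 / 2" using q0 by simp
      then show "\<bar>real (2 * h) * \<beta>\<bar> \<le> 1 / 2" using small[OF h] by linarith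
    qed
    finally have e: "nrm (2 * real h * \<theta>) = real (2 * h) * \<bar>\<beta>\<bar>" by (simp add: abs_mult)
    have "0 < real (2 * h) * \<bar>\<beta>\<bar>" using h b0 by simp
    then show ?thesis unfolding T_def using geo_bound[of "2 * real h * \<theta>"] e by simp
  qed
  have split: "(\<Sum>h\<in>{1..M}. T h) = (\<Sum>h\<in>{1..M}. if q dvd 2 * h then T h else 0) + (\<Sum>h\<in>{1..M}. if q dvd 2 * h then 0 else T h)"
    by (simp add: sum.distrib[symmetric] if_distrib cong: if_cong)
  have first: "(\<Sum>h\<in>{1..M}. if q dvd 2 * h then T h else 0) \<le> 4 * real N / real Q"
  proof -
    have "(\<Sum>h\<in>{1..M}. if q dvd 2 * h then T h else 0) = (\<Sum>h\<in>{h\<in>{1..M}. q dvd 2 * h}. T h)"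
      by (rule sum.inter_filter[symmetric]) simp
    also have "\<dots> \<le> 4 * real N / real Q"
    proof (rule partII[OF q0 M1 MN Q1])
      show "T h \<le> real M" if "h \<in> {1..M}" for h using T1 that .
      show "T h \<le> 1 / (real (2 * h) * \<bar>\<beta>\<bar>)" if "h \<in> {1..M}" "q dvd 2 * h" "\<beta> \<noteq> 0" for h
        using C2 that .
      show "Q < q \<or> \<beta> \<noteq> 0 \<and> real Q ^ 2 / real N < \<bar>\<beta>\<bar>"
      proof (cases "q \<le> Q")
        case True
        have "real Q ^ 2 / real N < \<bar>\<beta>\<bar>" unfolding \<beta>_def using minor[of q a] True q0 by simp
        moreover have "0 \<le> real Q ^ 2 / real N" by simp
        ultimately have "\<beta> \<noteq> 0" by (metis abs_zero leD)
        then show ?thesis using \<open>real Q ^ 2 / real N < \<bar>\<beta>\<bar>\<close> by blast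
      qed auto
    qed
    finally show ?thesis .
  qed
  have second: "(\<Sum>h\<in>{1..M}. if q dvd 2 * h then 0 else T h) \<le> 96 * real M * sqrt (real M)"
  proof -
    have "(\<Sum>h\<in>{1..M}. if q dvd 2 * h then 0 else T h) \<le> (\<Sum>h\<in>{1..M}. 2 * phi q a (2 * h))"
      by (rule sum_mono) (auto simp: phi_nonneg C1)
    also have "\<dots> = 2 * (\<Sum>h\<in>{1..M}. phi q a (2 * h))" by (simp add: sum_distrib_left)
    also have "\<dots> \<le> 2 * (48 * real M * sqrt (real M))"
      by (intro mult_left_mono partI q0 copq q4) auto
    finally show ?thesis by simp
  qed
  show ?thesis using split first second unfolding T_def by linarith
qed

lemma minor_W_bound:
  fixes M N Q :: nat and \<theta> :: real
  assumes M1: "1 \<le> M" and MN: "(real M)^2 \<le> 2 * real N" and Q1: "1 \<le> Q"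
    and minor: "\<And>(a::int) (q::nat). 1 \<le> q \<Longrightarrow> q \<le> Q \<Longrightarrow> real Q ^ 2 / real N < \<bar>\<theta> - of_int a / real q\<bar>"
  shows "(norm (W M \<theta>))^2 \<le> real M + 192 * real M * sqrt (real M) + 8 * real N / real Q"
  using weyl[of M \<theta>] minor_sum_bound[OF M1 MN Q1 minor] by simp



lemma card_ivl_bound:
  fixes S :: "nat set" and x y :: real
  assumes fin: "finite S" and xy: "x \<le> y" and S: "\<And>r. r \<in> S \<Longrightarrow> x \<le> real r \<and> real r \<le> y"
  shows "real (card S) \<le> y - x + 1"
proof (cases "S = {}")
  case True then show ?thesis using xy by simp
next
  case False
  then obtain r0 where r0: "r0 \<in> S" by auto
  have y0: "0 \<le> y" using S[OF r0] by linarith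
  define lo where "lo = nat \<lceil>x\<rceil>"
  define hi where "hi = nat \<lfloor>y\<rfloor>"
  have sub: "S \<subseteq> {lo..hi}"
  proof
    fix r assume "r \<in> S"
    then have "x \<le> real r" "real r \<le> y" using S by auto
    then show "r \<in> {lo..hi}" unfolding lo_def hi_def atLeastAtMost_iff
      using nat_ceiling_le_eq le_nat_floor by blast
  qed
  have "card S \<le> card {lo..hi}" by (rule card_mono) (use sub in auto)
  also have "card {lo..hi} = Suc hi - lo" by simp
  finally have c: "real (card S) \<le> real (Suc hi - lo)" by simp
  have hiy: "real hi \<le> y" unfolding hi_def using y0 by simp
  have lox: "x \<le> real lo"
  proof (cases "0 \<le> \<lceil>x\<rceil>")
    case True
    then have "real lo = of_int \<lceil>x\<rceil>" unfolding lo_def by simp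
    then show ?thesis using le_of_int_ceiling[of x] by linarith
  next
    case False
    then have "x \<le> 0" using le_of_int_ceiling[of x] by linarith
    then show ?thesis by simp
  qed
  have "real (Suc hi - lo) \<le> y - x + 1"
  proof (cases "lo \<le> Suc hi")
    case True
    then have "real (Suc hi - lo) = real hi + 1 - real lo" by (simp add: of_nat_diff)
    then show ?thesis using hiy lox by linarith
  next
    case False then show ?thesis using xy by simp
  qed
  then show ?thesis using c by linarith
qed

lemma a_range:
  fixes \<theta> \<eta> :: real and a :: int and q Q :: nat
  assumes th: "0 \<le> \<theta>" "\<theta> < 1" and q: "1 \<le> q" "q \<le> Q" and d: "\<bar>\<theta> - of_int a / real q\<bar> \<le> \<eta>"
    and eta: "\<eta> < 1 / real Q"
  shows "0 \<le> a \<and> a \<le> int q"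
proof -
  have "1 / real Q \<le> 1 / real q" using q by (intro divide_left_mono) auto
  then have e: "\<eta> < 1 / real q" using eta by linarith
  have "of_int a / real q > \<theta> - 1 / real q" using d e by linarith
  then have "of_int a / real q > - 1 / real q" using th by linarith
  then have "of_int a > (-1 :: real)" using q by (simp add: field_simps)
  then have a0: "0 \<le> a" by simp
  have "of_int a / real q < \<theta> + 1 / real q" using d e by linarith
  then have "of_int a / real q < (real q + 1) / real q" using th q by (simp add: add_divide_distrib)
  then have "of_int a < real q + 1" using q by (simp add: divide_strict_right_mono_neg field_simps)
  then have "a < int q + 1" by linarith
  then show ?thesis using a0 by simp
qed

definition majset :: "nat \<Rightarrow> nat \<Rightarrow> real \<Rightarrow> nat set" where
  "majset L Q \<eta> = {r\<in>{..<L}. \<exists>(a::int) (q::nat). 1 \<le> q \<and> q \<le> Q \<and> \<bar>real r / real L - of_int a / real q\<bar> \<le> \<eta>}"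

lemma major_card:
  fixes L Q :: nat and \<eta> :: real
  assumes L: "L > 0" and eta0: "0 \<le> \<eta>" and eta: "\<eta> < 1 / real Q"
  shows "real (card (majset L Q \<eta>)) \<le> real Q * (real Q + 1) * (2 * \<eta> * real L + 1)"
proof -
  define A where "A q a = {r\<in>{..<L}. \<bar>real r / real L - of_int a / real q\<bar> \<le> \<eta>}" for q :: nat and a :: int
  have sub: "majset L Q \<eta> \<subseteq> (\<Union>q\<in>{1..Q}. \<Union>a\<in>{0..int q}. A q a)"
  proof
    fix r assume "r \<in> majset L Q \<eta>"
    then obtain a q where r: "r < L" "1 \<le> q" "q \<le> Q" "\<bar>real r / real L - of_int a / real q\<bar> \<le> \<eta>"
      unfolding majset_def by auto
    have "0 \<le> real r / real L" "real r / real L < 1" using r L by auto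
    from a_range[OF this r(2,3,4) eta] have ar: "a \<in> {0..int q}" by simp
    have rA: "r \<in> A q a" using r unfolding A_def by simp
    have "q \<in> {1..Q}" using r by simp
    then show "r \<in> (\<Union>q\<in>{1..Q}. \<Union>a\<in>{0..int q}. A q a)" by (rule UN_I) (rule UN_I[where B="A q", OF ar rA])
  qed
  have cA: "real (card (A q a)) \<le> 2 * \<eta> * real L + 1" if "q \<ge> 1" for q a
  proof -
    define c where "c = of_int a / real q"
    have "real (card (A q a)) \<le> (c * real L + \<eta> * real L) - (c * real L - \<eta> * real L) + 1"
    proof (rule card_ivl_bound)
      show "finite (A q a)" unfolding A_def by simp
      show "c * real L - \<eta> * real L \<le> c * real L + \<eta> * real L" using eta0 by simp
      fix r assume "r \<in> A q a"
      then have d: "\<bar>real r / real L - c\<bar> \<le> \<eta>" unfolding A_def c_def by simp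
      have "real r - c * real L = real L * (real r / real L - c)" using L by (simp add: field_simps)
      then have "\<bar>real r - c * real L\<bar> = real L * \<bar>real r / real L - c\<bar>" by (simp add: abs_mult)
      also have "\<dots> \<le> real L * \<eta>" using d by (intro mult_left_mono) auto
      finally have "\<bar>real r - c * real L\<bar> \<le> \<eta> * real L" by (simp add: mult.commute)
      then show "c * real L - \<eta> * real L \<le> real r \<and> real r \<le> c * real L + \<eta> * real L" by linarith
    qed
    then show ?thesis by simp
  qed
  have "card (majset L Q \<eta>) \<le> card (\<Union>q\<in>{1..Q}. \<Union>a\<in>{0..int q}. A q a)"
    by (rule card_mono[OF _ sub]) (simp add: A_def)
  also have "\<dots> \<le> (\<Sum>q\<in>{1..Q}. card (\<Union>a\<in>{0..int q}. A q a))" by (rule card_UN_le) simp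
  also have "\<dots> \<le> (\<Sum>q\<in>{1..Q}. \<Sum>a\<in>{0..int q}. card (A q a))" by (intro sum_mono card_UN_le) simp
  finally have "real (card (majset L Q \<eta>)) \<le> real (\<Sum>q\<in>{1..Q}. \<Sum>a\<in>{0..int q}. card (A q a))"
    by (simp only: of_nat_le_iff)
  also have "\<dots> = (\<Sum>q\<in>{1..Q}. \<Sum>a\<in>{0..int q}. real (card (A q a)))" by simp
  also have "\<dots> \<le> (\<Sum>q\<in>{1..Q}. \<Sum>a\<in>{0..int q}. 2 * \<eta> * real L + 1)"
    by (intro sum_mono cA) auto
  also have "\<dots> = (\<Sum>q\<in>{1..Q}. (real q + 1) * (2 * \<eta> * real L + 1))" by simp
  also have "\<dots> \<le> (\<Sum>q\<in>{1..Q}. (real Q + 1) * (2 * \<eta> * real L + 1))"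
    using eta0 by (intro sum_mono mult_right_mono) auto
  also have "\<dots> = real Q * (real Q + 1) * (2 * \<eta> * real L + 1)" by simp
  finally show ?thesis .
qed



lemma Wfinal:
  fixes M N Q :: nat
  assumes Q1: "1 \<le> Q" and MQ: "28 * Q^2 \<le> M" and MN: "(real M)^2 \<le> 2 * real N"
  shows "real M + 192 * real M * sqrt (real M) + 8 * real N / real Q \<le> 100 * real N / real Q"
proof -
  have Qp: "0 < real Q" using Q1 by simp
  have "real (28 * Q^2) \<le> real M" using MQ by (simp only: of_nat_le_iff)
  then have M28: "28 * (real Q)^2 \<le> real M" by simp
  have "5 * real Q = sqrt (25 * (real Q)^2)" using Qp by (simp add: real_sqrt_mult)
  also have "\<dots> \<le> sqrt (real M)" using M28 by simp
  finally have s5: "5 * real Q \<le> sqrt (real M)" .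
  have s1: "1 \<le> sqrt (real M)" using s5 Q1 by linarith
  have sM: "sqrt (real M) * sqrt (real M) = real M" by simp
  have M0: "0 \<le> real M" by simp
  have "real M \<le> real M * sqrt (real M)" using s1 M0 by (metis mult.right_neutral mult_left_mono)
  then have a: "real M + 192 * real M * sqrt (real M) \<le> 193 * (real M * sqrt (real M))" by linarith
  have "193 * (real M * sqrt (real M)) * real Q \<le> 193 * (real M * sqrt (real M)) * (sqrt (real M) / 5)"
    using s5 M0 by (intro mult_left_mono) auto
  also have "\<dots> = 193 / 5 * (real M * (sqrt (real M) * sqrt (real M)))" by (simp add: algebra_simps)
  also have "\<dots> = 193 / 5 * (real M)^2" using sM by (simp add: power2_eq_square)
  also have "\<dots> \<le> 92 * real N" using MN by simp
  finally have "193 * (real M * sqrt (real M)) \<le> 92 * real N / real Q"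
    using Qp by (simp add: field_simps)
  then show ?thesis using a by (simp add: add_divide_distrib[symmetric])
qed

lemma sum_sq_le:
  assumes "\<forall>n\<in>{1..N}. f n \<in> {-1..1::real}"
  shows "(\<Sum>n\<in>{1..N}. (f n)^2) \<le> real N"
proof -
  have "(\<Sum>n\<in>{1..N}. (f n)^2) \<le> (\<Sum>n\<in>{1..N}. 1)"
  proof (rule sum_mono)
    fix n assume "n \<in> {1..N}"
    then have "f n \<in> {-1..1}" using assms by blast
    then have "\<bar>f n\<bar> \<le> 1" by auto
    then show "(f n)^2 \<le> 1" by (simp add: abs_square_le_1)
  qed
  then show ?thesis by simp
qed

lemma norm_W_le: "norm (W M \<theta>) \<le> real M"
proof -
  have "norm (W M \<theta>) \<le> (\<Sum>m\<in>{1..M}. norm (ee (real (m^2) * \<theta>)))" unfolding W_def by (rule norm_sum)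
  then show ?thesis by simp
qed

lemma prod_le_half: "(x::real) * y \<le> (x^2 + y^2) / 2"
proof -
  have "0 \<le> (x - y)^2" by simp
  then have "2 * (x * y) \<le> x^2 + y^2" unfolding power2_diff by (simp add: mult.assoc)
  then show ?thesis by (simp add: field_simps)
qed



lemma main_bound:
  fixes Q N :: nat and \<delta> :: real and f g :: "nat \<Rightarrow> real"
  assumes Q1: "1 \<le> Q" and \<delta>: "\<delta> > 0" and NN0: "400 * Q^4 \<le> N"
    and bnd: "\<forall>n\<in>{1..N}. f n \<in> {-1..1} \<and> g n \<in> {-1..1}"
    and hyp: "\<And>(a::int) (q::int) \<beta>. 1 \<le> a \<Longrightarrow> a \<le> int Q \<Longrightarrow> 1 \<le> q \<Longrightarrow> q \<le> int Q \<Longrightarrow>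
       norm (fhat N f (of_int a / of_int q + \<beta>)) \<le> \<delta> * \<bar>\<beta>\<bar> * (real N)^2"
  shows "\<bar>infsum (\<lambda>n. conv N f g n * indicator Sq n) {(1::int)..}\<bar>
     \<le> (4 * \<delta> * real Q ^ 4 + 10 / sqrt (real Q)) * (real N * sqrt (real N))"
proof -
  have Qp: "0 < real Q" using Q1 by simp
  have Q4: "1 \<le> Q^4" using Q1 by simp
  have N400: "400 \<le> N" using NN0 Q4 by linarith
  have Np: "0 < real N" using N400 by simp
  define s where "s = sqrt (2 * real N)"
  have s0: "0 \<le> s" unfolding s_def by simp
  define M where "M = nat \<lfloor>s\<rfloor>"
  have Mf: "real M = of_int \<lfloor>s\<rfloor>" unfolding M_def using s0 by simp
  have Ms: "real M \<le> s" "s < real M + 1" using Mf of_int_floor_le[of s] real_of_int_floor_add_one_gt[of s] by auto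
  have MN: "(real M)^2 \<le> 2 * real N"
  proof -
    have "(real M)^2 \<le> s^2" using Ms by (intro power_mono) auto
    then show ?thesis unfolding s_def by simp
  qed
  have MN2: "2 * real N < (real M + 1)^2"
  proof -
    have "s^2 < (real M + 1)^2" using Ms s0 by (intro power_strict_mono) auto
    then show ?thesis unfolding s_def by simp
  qed
  have MNn: "M^2 \<le> 2 * N"
  proof -
    have "real (M^2) \<le> real (2 * N)" using MN by simp
    then show ?thesis by (simp only: of_nat_le_iff)
  qed
  have MNn2: "2 * N < (Suc M)^2"
  proof -
    have "real (2 * N) < real ((Suc M)^2)" using MN2 by (simp add: add.commute)
    then show ?thesis by (simp only: of_nat_less_iff)
  qed
  have M28: "28 * Q^2 \<le> M"
  proof -
    have "(28 * Q^2)^2 = 784 * Q^4" by (simp add: power_mult_distrib power2_eq_square power4_eq_xxxx)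
    also have "\<dots> < 2 * N" using NN0 Q4 by linarith
    also have "\<dots> < (Suc M)^2" by (rule MNn2)
    finally have "28 * Q^2 < Suc M" by (rule power_less_imp_less_base) simp
    then show ?thesis by simp
  qed
  have M1: "1 \<le> M" using M28 Q1 by (metis dual_order.trans le_add1 mult_le_mono one_le_numeral one_le_power le_numeral_extra(4) mult_1)
  define L where "L = 4 * N"
  have L0: "L > 0" and L2: "2 * N < L" using N400 unfolding L_def by auto
  define \<eta> where "\<eta> = real Q ^ 2 / real N"
  have \<eta>0: "0 \<le> \<eta>" unfolding \<eta>_def by simp
  have \<eta>Q: "\<eta> < 1 / real Q"
  proof -
    have "Q^3 \<le> Q^4" using Q1 by (intro power_increasing) auto
    then have "Q^3 < N" using NN0 Q4 by linarith
    then have "real Q ^ 3 < real N" by (metis of_nat_less_iff of_nat_power)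
    then have "real Q ^ 2 * real Q < real N" by (simp add: power3_eq_cube power2_eq_square)
    then show ?thesis unfolding \<eta>_def using Qp Np by (simp add: field_simps)
  qed
  have \<eta>L: "\<eta> * real L = 4 * real Q ^ 2" unfolding \<eta>_def L_def using Np by simp
  define th where "th r = real r / real L" for r
  define nf where "nf r = norm (fhat N f (th r))" for r
  define ng where "ng r = norm (fhat N g (th r))" for r
  define nW where "nW r = norm (W M (th r))" for r
  define X where "X r = nf r * ng r * nW r" for r
  define Tsum where "Tsum = (\<Sum>m\<in>{1..M}. \<Sum>n\<in>{1..N}. \<Sum>n'\<in>{1..N}. if m^2 = n + n' then f n * g n' else 0)"
  have lhs: "infsum (\<lambda>n. conv N f g n * indicator Sq n) {(1::int)..} = Tsum"
    unfolding Tsum_def by (rule lhs_eq[OF MNn MNn2])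
  have ident: "(\<Sum>r<L. fhat N f (th r) * fhat N g (th r) * W M (th r)) = of_nat L * of_real Tsum"
    unfolding th_def Tsum_def by (rule main_identity[OF L0 L2 MNn])
  have T1: "real L * \<bar>Tsum\<bar> \<le> (\<Sum>r<L. X r)"
  proof -
    have "real L * \<bar>Tsum\<bar> = norm (of_nat L * complex_of_real Tsum)" by (simp add: norm_mult)
    also have "\<dots> = norm (\<Sum>r<L. fhat N f (th r) * fhat N g (th r) * W M (th r))" using ident by simp
    also have "\<dots> \<le> (\<Sum>r<L. norm (fhat N f (th r) * fhat N g (th r) * W M (th r)))" by (rule norm_sum)
    also have "\<dots> = (\<Sum>r<L. X r)" unfolding X_def nf_def ng_def nW_def by (simp add: norm_mult)
    finally show ?thesis .
  qed
  define Maj where "Maj = majset L Q \<eta>"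
  have MajSub: "Maj \<subseteq> {..<L}" by (auto simp: Maj_def majset_def)
  have split: "(\<Sum>r<L. X r) = (\<Sum>r\<in>{..<L} - Maj. X r) + (\<Sum>r\<in>Maj. X r)"
    by (rule sum.subset_diff[OF MajSub]) simp
  have bf: "\<forall>n\<in>{1..N}. f n \<in> {-1..1}" and bg: "\<forall>n\<in>{1..N}. g n \<in> {-1..1}" using bnd by auto
  have PF: "(\<Sum>r<L. (nf r)^2) \<le> real L * real N"
  proof -
    have "(\<Sum>r<L. (nf r)^2) = real L * (\<Sum>n\<in>{1..N}. (f n)^2)"
      unfolding nf_def th_def by (rule parseval) (use L0 L_def in auto)
    also have "\<dots> \<le> real L * real N" by (intro mult_left_mono sum_sq_le bf) auto
    finally show ?thesis .
  qed
  have PG: "(\<Sum>r<L. (ng r)^2) \<le> real L * real N"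
  proof -
    have "(\<Sum>r<L. (ng r)^2) = real L * (\<Sum>n\<in>{1..N}. (g n)^2)"
      unfolding ng_def th_def by (rule parseval) (use L0 L_def in auto)
    also have "\<dots> \<le> real L * real N" by (intro mult_left_mono sum_sq_le bg) auto
    finally show ?thesis .
  qed
  define B where "B = 10 * sqrt (real N) / sqrt (real Q)"
  have B0: "0 \<le> B" unfolding B_def by simp
  have Wmin: "nW r \<le> B" if r: "r \<in> {..<L} - Maj" for r
  proof -
    have minor: "real Q ^ 2 / real N < \<bar>th r - of_int a / real q\<bar>" if "1 \<le> q" "q \<le> Q" for a :: int and q :: nat
    proof (rule ccontr)
      assume "\<not> ?thesis"
      then have "\<bar>th r - of_int a / real q\<bar> \<le> \<eta>" unfolding \<eta>_def by simp
      then have "r \<in> Maj" using r that unfolding Maj_def majset_def th_def by auto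
      then show False using r by simp
    qed
    have "(nW r)^2 \<le> real M + 192 * real M * sqrt (real M) + 8 * real N / real Q"
      unfolding nW_def by (rule minor_W_bound[OF M1 MN Q1 minor])
    also have "\<dots> \<le> 100 * real N / real Q" by (rule Wfinal[OF Q1 M28 MN])
    finally have "nW r \<le> sqrt (100 * real N / real Q)" by (rule real_le_rsqrt)
    also have "\<dots> = B" unfolding B_def by (simp add: real_sqrt_divide real_sqrt_mult)
    finally show ?thesis .
  qed
  have minorpart: "(\<Sum>r\<in>{..<L} - Maj. X r) \<le> B * (real L * real N)"
  proof -
    have "(\<Sum>r\<in>{..<L} - Maj. X r) \<le> (\<Sum>r\<in>{..<L} - Maj. nf r * ng r * B)"
      unfolding X_def by (intro sum_mono mult_left_mono Wmin) (auto simp: nf_def ng_def)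
    also have "\<dots> \<le> (\<Sum>r<L. nf r * ng r * B)"
      by (rule sum_mono2) (use B0 in \<open>auto simp: nf_def ng_def\<close>)
    also have "\<dots> = B * (\<Sum>r<L. nf r * ng r)" by (simp add: sum_distrib_left mult_ac)
    also have "\<dots> \<le> B * (\<Sum>r<L. ((nf r)^2 + (ng r)^2) / 2)"
      by (intro mult_left_mono sum_mono prod_le_half B0)
    also have "\<dots> = B * (((\<Sum>r<L. (nf r)^2) + (\<Sum>r<L. (ng r)^2)) / 2)"
      by (simp add: sum_divide_distrib[symmetric] sum.distrib)
    also have "\<dots> \<le> B * ((real L * real N + real L * real N) / 2)"
      using PF PG B0 by (intro mult_left_mono) auto
    also have "\<dots> = B * (real L * real N)" by simp
    finally show ?thesis .
  qed
  have fmaj: "nf r \<le> \<delta> * \<eta> * (real N)^2" if r: "r \<in> Maj" for r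
  proof -
    obtain a q where aq: "r < L" "1 \<le> q" "q \<le> Q" "\<bar>th r - of_int a / real q\<bar> \<le> \<eta>"
      using r unfolding Maj_def majset_def th_def by auto
    have "0 \<le> th r" "th r < 1" using aq(1) L0 unfolding th_def by auto
    from a_range[OF this aq(2,3,4) \<eta>Q] have a: "0 \<le> a" "a \<le> int q" by auto
    show ?thesis
    proof (cases "a = 0")
      case True
      have "fhat N f (th r) = fhat N f (th r + of_int 1)" by (rule fhat_periodic[symmetric])
      also have "th r + of_int 1 = of_int 1 / of_int 1 + th r" by simp
      finally have "nf r = norm (fhat N f (of_int 1 / of_int 1 + th r))" unfolding nf_def by simp
      also have "\<dots> \<le> \<delta> * \<bar>th r\<bar> * (real N)^2" by (rule hyp) (use Q1 in auto)
      also have "\<dots> \<le> \<delta> * \<eta> * (real N)^2" using aq(4) True \<delta> by (intro mult_right_mono mult_left_mono) auto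
      finally show ?thesis .
    next
      case False
      have "th r = of_int a / of_int (int q) + (th r - of_int a / real q)" by simp
      then have "nf r = norm (fhat N f (of_int a / of_int (int q) + (th r - of_int a / real q)))"
        unfolding nf_def by metis
      also have "\<dots> \<le> \<delta> * \<bar>th r - of_int a / real q\<bar> * (real N)^2"
        by (rule hyp) (use a False aq in auto)
      also have "\<dots> \<le> \<delta> * \<eta> * (real N)^2" using aq(4) \<delta> by (intro mult_right_mono mult_left_mono) auto
      finally show ?thesis .
    qed
  qed
  have cardMaj: "real (card Maj) \<le> 18 * real Q ^ 4"
  proof -
    have "real (card Maj) \<le> real Q * (real Q + 1) * (2 * \<eta> * real L + 1)"
      unfolding Maj_def by (rule major_card[OF L0 \<eta>0 \<eta>Q])
    also have "2 * \<eta> * real L + 1 = 8 * real Q ^ 2 + 1" using \<eta>L by simp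
    also have "real Q * (real Q + 1) * (8 * real Q ^ 2 + 1) \<le> real Q * (2 * real Q) * (9 * real Q ^ 2)"
    proof (intro mult_mono)
      show "real Q + 1 \<le> 2 * real Q" using Q1 by simp
      have "1 \<le> real Q ^ 2" using Q1 by simp
      then show "8 * real Q ^ 2 + 1 \<le> 9 * real Q ^ 2" by simp
    qed auto
    also have "\<dots> = 18 * real Q ^ 4" by (simp add: power2_eq_square power4_eq_xxxx)
    finally show ?thesis .
  qed
  have CS: "(\<Sum>r\<in>Maj. ng r) \<le> 9 * real Q ^ 2 * real N"
  proof -
    have "(\<Sum>r\<in>Maj. 1 * ng r)^2 \<le> (\<Sum>r\<in>Maj. 1^2) * (\<Sum>r\<in>Maj. (ng r)^2)"
      by (rule Cauchy_Schwarz_ineq_sum)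
    also have "(\<Sum>r\<in>Maj. (ng r)^2) \<le> (\<Sum>r<L. (ng r)^2)" by (rule sum_mono2[OF _ MajSub]) auto
    then have "(\<Sum>r\<in>Maj. 1^2) * (\<Sum>r\<in>Maj. (ng r)^2) \<le> real (card Maj) * (real L * real N)"
      using PG by (simp add: mult_left_mono)
    also have "\<dots> \<le> (18 * real Q ^ 4) * (real L * real N)" using cardMaj by (intro mult_right_mono) auto
    also have "\<dots> \<le> (9 * real Q ^ 2 * real N)^2" unfolding L_def by (simp add: power2_eq_square power4_eq_xxxx)
    finally have "(\<Sum>r\<in>Maj. ng r)^2 \<le> (9 * real Q ^ 2 * real N)^2" by simp
    then show ?thesis by (rule power2_le_imp_le) simp
  qed
  have majorpart: "(\<Sum>r\<in>Maj. X r) \<le> 9 * \<delta> * real Q ^ 4 * (real N)^2 * real M"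
  proof -
    have "(\<Sum>r\<in>Maj. X r) \<le> (\<Sum>r\<in>Maj. (\<delta> * \<eta> * (real N)^2) * ng r * real M)"
      unfolding X_def
    proof (intro sum_mono mult_mono fmaj)
      fix r show "nW r \<le> real M" unfolding nW_def by (rule norm_W_le)
    qed (use \<delta> \<eta>0 in \<open>auto simp: ng_def nW_def intro!: mult_nonneg_nonneg\<close>)
    also have "\<dots> = (\<Sum>r\<in>Maj. (\<delta> * \<eta> * (real N)^2 * real M) * ng r)"
      by (rule sum.cong) (simp_all add: mult_ac)
    also have "\<dots> = (\<delta> * \<eta> * (real N)^2 * real M) * (\<Sum>r\<in>Maj. ng r)"
      by (rule sum_distrib_left[symmetric])
    also have "\<dots> \<le> (\<delta> * \<eta> * (real N)^2 * real M) * (9 * real Q ^ 2 * real N)"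
      using CS \<delta> \<eta>0 by (intro mult_left_mono) auto
    also have "\<dots> = 9 * \<delta> * real Q ^ 4 * (real N)^2 * real M"
      unfolding \<eta>_def using Np by (simp add: power2_eq_square power4_eq_xxxx)
    finally show ?thesis .
  qed
  have tot: "real L * \<bar>Tsum\<bar> \<le> B * (real L * real N) + 9 * \<delta> * real Q ^ 4 * (real N)^2 * real M"
    using T1 split minorpart majorpart by linarith
  have LN: "real L = 4 * real N" unfolding L_def by simp
  have T2: "\<bar>Tsum\<bar> \<le> B * real N + 9 / 4 * \<delta> * real Q ^ 4 * real N * real M"
  proof -
    have "4 * real N * \<bar>Tsum\<bar> \<le> 4 * real N * (B * real N + 9 / 4 * \<delta> * real Q ^ 4 * real N * real M)"
      using tot unfolding LN by (simp add: algebra_simps power2_eq_square)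
    then show ?thesis using Np by (simp add: mult_le_cancel_left_pos)
  qed
  have Msq: "real M \<le> 3 / 2 * sqrt (real N)"
  proof -
    have "sqrt 2 \<le> sqrt (9 / 4)" by simp
    also have "sqrt (9 / 4) = 3 / (2::real)" by (simp add: real_sqrt_divide)
    finally have s2: "sqrt 2 \<le> 3 / (2::real)" .
    have "real M \<le> sqrt 2 * sqrt (real N)" using Ms unfolding s_def by (simp add: real_sqrt_mult)
    also have "\<dots> \<le> 3 / 2 * sqrt (real N)" using s2 by (intro mult_right_mono) auto
    finally show ?thesis .
  qed
  have "9 / 4 * \<delta> * real Q ^ 4 * real N * real M \<le> 9 / 4 * \<delta> * real Q ^ 4 * real N * (3 / 2 * sqrt (real N))"
    using Msq \<delta> by (intro mult_left_mono) auto
  also have "\<dots> \<le> 4 * \<delta> * real Q ^ 4 * (real N * sqrt (real N))"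
  proof -
    have "0 \<le> \<delta> * real Q ^ 4 * (real N * sqrt (real N))" using \<delta> by simp
    then show ?thesis by (simp add: algebra_simps)
  qed
  finally have m: "9 / 4 * \<delta> * real Q ^ 4 * real N * real M \<le> 4 * \<delta> * real Q ^ 4 * (real N * sqrt (real N))" .
  have b: "B * real N = 10 / sqrt (real Q) * (real N * sqrt (real N))" unfolding B_def by simp
  show ?thesis using T2 m b lhs by (simp add: algebra_simps)
qed



theorem proposition4p4:
  fixes lam :: real
  assumes "lam > 0" and "\<exists>k::int. 1 / lam^2 = of_int k"
  shows "\<exists>N0::nat. \<forall>\<delta>::real. \<forall>N::nat. \<forall>f g :: nat \<Rightarrow> real.
     \<delta> > 0 \<longrightarrow> N \<ge> N0 \<longrightarrow>
     (\<forall>n\<in>{1..N}. f n \<in> {-1..1} \<and> g n \<in> {-1..1}) \<longrightarrow>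
     (\<forall>a q :: int. \<forall>\<beta>::real. 1 \<le> a \<and> real_of_int a \<le> 1 / lam^2 \<and> 1 \<le> q \<and> real_of_int q \<le> 1 / lam^2 \<longrightarrow>
         norm (fhat N f (real_of_int a / real_of_int q + \<beta>)) \<le> \<delta> * \<bar>\<beta>\<bar> * (real N)^2) \<longrightarrow>
     \<bar>infsum (\<lambda>n. conv N f g n * indicator Sq n) {(1::int)..}\<bar>
        \<le> 10 * (\<delta> * (1 / lam^8) + lam) * (real N) powr (3/2)"
proof -
  obtain k :: int where k: "1 / lam^2 = of_int k" using assms(2) by blast
  have "0 < 1 / lam^2" using assms(1) by simp
  then have k1: "1 \<le> k" using k by simp
  define Q where "Q = nat k"
  have QR: "real Q = 1 / lam^2" using k k1 unfolding Q_def by simp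
  have Q1: "1 \<le> Q" using k1 unfolding Q_def by simp
  have lamQ: "1 / sqrt (real Q) = lam"
  proof -
    have "sqrt (real Q) = sqrt (1 / lam^2)" using QR by simp
    also have "\<dots> = 1 / lam" using assms(1) by (simp add: real_sqrt_divide)
    finally show ?thesis by simp
  qed
  have lam8: "1 / lam^8 = real Q ^ 4"
  proof -
    have "real Q ^ 4 = (1 / lam^2)^4" using QR by simp
    also have "\<dots> = 1 / lam^8" by (simp add: power_divide flip: power_mult)
    finally show ?thesis by simp
  qed
  show ?thesis
  proof (rule exI[of _ "400 * Q^4"], intro allI impI)
    fix \<delta> :: real and N :: nat and f g :: "nat \<Rightarrow> real"
    assume \<delta>: "\<delta> > 0" and NN0: "400 * Q^4 \<le> N"
      and bnd: "\<forall>n\<in>{1..N}. f n \<in> {-1..1} \<and> g n \<in> {-1..1}"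
      and hyp: "\<forall>a q :: int. \<forall>\<beta>::real. 1 \<le> a \<and> real_of_int a \<le> 1 / lam^2 \<and> 1 \<le> q \<and> real_of_int q \<le> 1 / lam^2 \<longrightarrow>
         norm (fhat N f (real_of_int a / real_of_int q + \<beta>)) \<le> \<delta> * \<bar>\<beta>\<bar> * (real N)^2"
    have hyp': "norm (fhat N f (of_int a / of_int q + \<beta>)) \<le> \<delta> * \<bar>\<beta>\<bar> * (real N)^2"
      if "1 \<le> a" "a \<le> int Q" "1 \<le> q" "q \<le> int Q" for a q :: int and \<beta> :: real
    proof -
      have "real_of_int a \<le> 1 / lam^2" "real_of_int q \<le> 1 / lam^2"
        using that QR by (metis of_int_le_iff of_int_of_nat_eq)+
      then show ?thesis using hyp that by blast
    qed
    have "1 \<le> Q^4" using Q1 by simp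
    then have "400 \<le> N" using NN0 by linarith
    then have Npos: "0 < real N" by simp
    have "\<bar>infsum (\<lambda>n. conv N f g n * indicator Sq n) {(1::int)..}\<bar>
       \<le> (4 * \<delta> * real Q ^ 4 + 10 / sqrt (real Q)) * (real N * sqrt (real N))"
      by (rule main_bound[OF Q1 \<delta> NN0 bnd hyp'])
    also have "\<dots> \<le> 10 * (\<delta> * real Q ^ 4 + 1 / sqrt (real Q)) * (real N * sqrt (real N))"
      using \<delta> by (intro mult_right_mono) auto
    also have "real N * sqrt (real N) = (real N) powr (3/2)"
    proof -
      have "(real N) powr (3/2) = (real N) powr (1 + 1/2)" by simp
      also have "\<dots> = (real N) powr 1 * (real N) powr (1/2)" by (rule powr_add)
      also have "\<dots> = real N * (real N) powr (1/2)" using Npos by simp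
      also have "\<dots> = real N * sqrt (real N)" by (simp add: powr_half_sqrt)
      finally show ?thesis by simp
    qed
    finally show "\<bar>infsum (\<lambda>n. conv N f g n * indicator Sq n) {(1::int)..}\<bar>
        \<le> 10 * (\<delta> * (1 / lam^8) + lam) * (real N) powr (3/2)" using lam8 lamQ by simp
  qed
qed


end
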